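(* Let $s \ge \max( \|A\|^{2/3}_{L^\infty(Q_T)},s_0)$, let $B$ satisfy $\rho_0(s)B\in L^2(Q_T)$ and let $z_0\in L^2(\Omega)$. There exists a unique $p\in P$ solution of $$ (p,q)_P=\int_\Omega z_0\,q(0)+\int_{Q_T} B\, q ,\quad \forall q\in P. $$ This solution satisfies the estimate $$ \|p\|_P\le Cs^{-3/2}\big( \Vert \rho_0(s)\,B\Vert_{L^2(Q_T)} +e^{cs}\|z_0\|_{L^2(\Omega)}\big), $$ where $c:=\Vert \varphi(\cdot,0)\Vert_{L^\infty(\Omega)}$.
   Context: Let $\Omega=(0,1)$, $\omega\subset\subset\Omega$ a non-empty open set, $T>0$, $Q_T=\Omega\times(0,T)$, $q_T=\omega\times(0,T)$, $\Sigma_T=\partial\Omega\times(0,T)$, and $A\in L^\infty(Q_T)$. Carleman weights: for $s\ge1$, $\lambda\ge1$, set $\rho(x,t,s)=\exp(s\varphi(x,t))$, $\xi(x,t)=\theta(t)\exp(\lambda\widehat\psi(x))$, $\rho_0(s)=\xi^{-3/2}\rho(s)$, $\rho_1(s)=\xi^{-1}\rho(s)$. Here $\widehat\psi=\widetilde\psi+6$ with $\widetilde\psi\in C^1(\overline\Omega)$, $\widetilde\psi\in(0,1)$ in $\Omega$, $\widetilde\psi=0$ on $\partial\Omega$, $|\partial_x\widetilde\psi|>0$ in $\overline{\Omega\setminus\omega}$; $\varphi(x,t)=\theta(t)\big(\lambda\exp(12\lambda)-\exp(\lambda\widehat\psi(x))\big)$; and $\theta\in C^2([0,T))$ is defined,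 with $\mu=s\lambda^2e^{2\lambda}$ and $0<T_1<\min(1/4,3T/8)$, by $\theta(t)=1+(1-4t/T)^\mu$ on $[0,T/4]$, $\theta=1$ on $[T/4,T-2T_1]$, $\theta$ increasing on $[T-2T_1,T-T_1]$, $\theta(t)=1/(T-t)$ on $[T-T_1,T)$. One has $1<\rho_0\le\rho_1\le\rho$. $\lambda_0\ge1$ and $s_0\ge1$ are constants such that for $\lambda=\lambda_0$ and all $s\ge\max(\|A\|^{2/3}_{L^\infty(Q_T)},s_0)$ the Carleman estimate holds: for all $p\in P_0:=\{q\in C^2(\overline{Q_T}): q=0 \text{ on }\Sigma_T\}$, $$\int_\Omega\rho^{-2}(0,s)|\partial_x p(0)|^2+s^3\lambda_0^4e^{14\lambda_0}\int_\Omega\rho^{-2}(0,s)|p(0)|^2+s\lambda_0^2\int_{Q_T}\rho_1^{-2}(s)|\partial_xp|^2+s^3\lambda_0^4\int_{Q_T}\rho_0^{-2}(s)|p|^2\le C\int_{Q_T}\rho^{-2}(s)|L_A^\star p|^2+Cs^3\lambda_0^4\int_{q_T}\rho_0^{-2}(s)|p|^2,$$ where $L^\star_A q:=-\partial_t q-\partial_{xx}q+Aq$. On $P_0$ define the scalar product $(p,q)_P:=\int_{Q_T}\rho^{-2}(s)L^\star_Ap\,L^\star_Aq+s^3\lambda_0^4\int_{q_T}\rho_0^{-2}(s)p\,q$, and let $P$ be the completion of $P_0$ for the associated norm $\|\cdot\|_P$ (a Hilbert space); by density the Carleman estimate (with right-hand side $C\|p\|_P^2$) holds for all $p\in P$.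 $C$ denotes a constant depending only on $\Omega,\omega,\lambda_0,T$. *)

theory Defs
  imports "HOL-Probability.Probability"
begin

definition Omega :: "real set" where "Omega = {0<..<1}"
definition QT :: "real \<Rightarrow> (real \<times> real) set" where "QT T = Omega \<times> {0<..<T}"
definition qT :: "real set \<Rightarrow> real \<Rightarrow> (real \<times> real) set" where "qT \<omega> T = \<omega> \<times> {0<..<T}"
definition SigmaT :: "real \<Rightarrow> (real \<times> real) set" where "SigmaT T = {0,1} \<times> {0<..<T}"

definition dx :: "(real \<times> real \<Rightarrow> real) \<Rightarrow> real \<times> real \<Rightarrow> real" where
  "dx f y = deriv (\<lambda>x'. f (x', snd y)) (fst y)"
definition dt :: "(real \<times> real \<Rightarrow> real) \<Rightarrow> real \<times> real \<Rightarrow> real" where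
  "dt f y = deriv (\<lambda>t'. f (fst y, t')) (snd y)"

definition partials_exist :: "(real \<times> real \<Rightarrow> real) \<Rightarrow> bool" where
  "partials_exist f \<longleftrightarrow> (\<forall>y. (\<lambda>x'. f (x', snd y)) differentiable (at (fst y))
                           \<and> (\<lambda>t'. f (fst y, t')) differentiable (at (snd y)))"

text \<open>C^2 functions of (x,t) (on the whole plane; their restrictions to the closed
  rectangle are exactly C^2(closure Q_T)).\<close>
definition C2 :: "(real \<times> real \<Rightarrow> real) \<Rightarrow> bool" where
  "C2 f \<longleftrightarrow> partials_exist f \<and> partials_exist (dx f) \<and> partials_exist (dt f)
     \<and> continuous_on UNIV f \<and> continuous_on UNIV (dx f) \<and> continuous_on UNIV (dt f)
     \<and> continuous_on UNIV (dx (dx f)) \<and> continuous_on UNIV (dx (dt f))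
     \<and> continuous_on UNIV (dt (dx f)) \<and> continuous_on UNIV (dt (dt f))"

definition P0 :: "real \<Rightarrow> (real \<times> real \<Rightarrow> real) set" where
  "P0 T = {p. C2 p \<and> (\<forall>y\<in>SigmaT T. p y = 0)}"

definition C2_on :: "(real \<Rightarrow> real) \<Rightarrow> real set \<Rightarrow> bool" where
  "C2_on f S \<longleftrightarrow> (\<exists>f1 f2. (\<forall>t\<in>S. (f has_real_derivative f1 t) (at t within S)
                           \<and> (f1 has_real_derivative f2 t) (at t within S))
                       \<and> continuous_on S f2)"

definition isLinf :: "('a::euclidean_space) set \<Rightarrow> ('a \<Rightarrow> real) \<Rightarrow> bool" where
  "isLinf S f \<longleftrightarrow> f \<in> borel_measurable (restrict_space lebesgue S)
      \<and> esssup (restrict_space lebesgue S) (\<lambda>y. ereal \<bar>f y\<bar>) < \<infinity>"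
definition normLinf :: "('a::euclidean_space) set \<Rightarrow> ('a \<Rightarrow> real) \<Rightarrow> real" where
  "normLinf S f = real_of_ereal (esssup (restrict_space lebesgue S) (\<lambda>y. ereal \<bar>f y\<bar>))"
definition isL2 :: "('a::euclidean_space) set \<Rightarrow> ('a \<Rightarrow> real) \<Rightarrow> bool" where
  "isL2 S f \<longleftrightarrow> f \<in> borel_measurable (restrict_space lebesgue S)
      \<and> set_integrable lebesgue S (\<lambda>y. (f y)\<^sup>2)"
definition normL2 :: "('a::euclidean_space) set \<Rightarrow> ('a \<Rightarrow> real) \<Rightarrow> real" where
  "normL2 S f = sqrt (LINT y:S|lebesgue. (f y)\<^sup>2)"

section \<open>Carleman weights (th s t is theta(t) for the parameter s, lam = lambda)\<close>

definition psihat :: "(real \<Rightarrow> real) \<Rightarrow> real \<Rightarrow> real" where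
  "psihat psi x = psi x + 6"
definition xi :: "(real \<Rightarrow> real \<Rightarrow> real) \<Rightarrow> real \<Rightarrow> (real \<Rightarrow> real) \<Rightarrow> real \<Rightarrow> real \<times> real \<Rightarrow> real" where
  "xi th lam psi s y = th s (snd y) * exp (lam * psihat psi (fst y))"
definition phi :: "(real \<Rightarrow> real \<Rightarrow> real) \<Rightarrow> real \<Rightarrow> (real \<Rightarrow> real) \<Rightarrow> real \<Rightarrow> real \<times> real \<Rightarrow> real" where
  "phi th lam psi s y = th s (snd y) * (lam * exp (12 * lam) - exp (lam * psihat psi (fst y)))"
definition rho :: "(real \<Rightarrow> real \<Rightarrow> real) \<Rightarrow> real \<Rightarrow> (real \<Rightarrow> real) \<Rightarrow> real \<Rightarrow> real \<times> real \<Rightarrow> real" where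
  "rho th lam psi s y = exp (s * phi th lam psi s y)"
definition rho0 :: "(real \<Rightarrow> real \<Rightarrow> real) \<Rightarrow> real \<Rightarrow> (real \<Rightarrow> real) \<Rightarrow> real \<Rightarrow> real \<times> real \<Rightarrow> real" where
  "rho0 th lam psi s y = xi th lam psi s y powr (-3/2) * rho th lam psi s y"
definition rho1 :: "(real \<Rightarrow> real \<Rightarrow> real) \<Rightarrow> real \<Rightarrow> (real \<Rightarrow> real) \<Rightarrow> real \<Rightarrow> real \<times> real \<Rightarrow> real" where
  "rho1 th lam psi s y = xi th lam psi s y powr (-1) * rho th lam psi s y"

definition Lstar :: "(real \<times> real \<Rightarrow> real) \<Rightarrow> (real \<times> real \<Rightarrow> real) \<Rightarrow> real \<times> real \<Rightarrow> real" where
  "Lstar A q y = - dt q y - dx (dx q) y + A y * q y"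

definition ipP0 :: "real \<Rightarrow> real set \<Rightarrow> (real \<Rightarrow> real \<Rightarrow> real) \<Rightarrow> real \<Rightarrow> (real \<Rightarrow> real)
     \<Rightarrow> (real \<times> real \<Rightarrow> real) \<Rightarrow> real \<Rightarrow> (real \<times> real \<Rightarrow> real) \<Rightarrow> (real \<times> real \<Rightarrow> real) \<Rightarrow> real" where
  "ipP0 T \<omega> th lam psi A s p q =
     (LINT y:QT T|lebesgue. (1 / (rho th lam psi s y)\<^sup>2) * Lstar A p y * Lstar A q y)
     + s ^ 3 * lam ^ 4 * (LINT y:qT \<omega> T|lebesgue. (1 / (rho0 th lam psi s y)\<^sup>2) * p y * q y)"

definition carleman_lhs :: "real \<Rightarrow> (real \<Rightarrow> real \<Rightarrow> real) \<Rightarrow> real \<Rightarrow> (real \<Rightarrow> real) \<Rightarrow> real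
     \<Rightarrow> (real \<times> real \<Rightarrow> real) \<Rightarrow> real" where
  "carleman_lhs T th lam psi s p =
     (LINT x:Omega|lebesgue. (1 / (rho th lam psi s (x, 0))\<^sup>2) * (dx p (x, 0))\<^sup>2)
     + s ^ 3 * lam ^ 4 * exp (14 * lam) * (LINT x:Omega|lebesgue. (1 / (rho th lam psi s (x, 0))\<^sup>2) * (p (x, 0))\<^sup>2)
     + s * lam ^ 2 * (LINT y:QT T|lebesgue. (1 / (rho1 th lam psi s y)\<^sup>2) * (dx p y)\<^sup>2)
     + s ^ 3 * lam ^ 4 * (LINT y:QT T|lebesgue. (1 / (rho0 th lam psi s y)\<^sup>2) * (p y)\<^sup>2)"

section \<open>The completion P of P0: Cauchy sequences modulo null sequences\<close>

definition P_Cauchy :: "'f set \<Rightarrow> ('f::minus \<Rightarrow> 'f \<Rightarrow> real) \<Rightarrow> (nat \<Rightarrow> 'f) \<Rightarrow> bool" where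
  "P_Cauchy S ip X \<longleftrightarrow> (\<forall>n. X n \<in> S) \<and>
     (\<forall>e>0. \<exists>N. \<forall>m\<ge>N. \<forall>n\<ge>N. sqrt (ip (X m - X n) (X m - X n)) < e)"
definition P_equiv :: "('f::minus \<Rightarrow> 'f \<Rightarrow> real) \<Rightarrow> (nat \<Rightarrow> 'f) \<Rightarrow> (nat \<Rightarrow> 'f) \<Rightarrow> bool" where
  "P_equiv ip X Y \<longleftrightarrow> (\<lambda>n. sqrt (ip (X n - Y n) (X n - Y n))) \<longlonglongrightarrow> 0"
definition P_inner :: "('f \<Rightarrow> 'f \<Rightarrow> real) \<Rightarrow> (nat \<Rightarrow> 'f) \<Rightarrow> (nat \<Rightarrow> 'f) \<Rightarrow> real" where
  "P_inner ip X Y = lim (\<lambda>n. ip (X n) (Y n))"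
definition P_norm :: "('f \<Rightarrow> 'f \<Rightarrow> real) \<Rightarrow> (nat \<Rightarrow> 'f) \<Rightarrow> real" where
  "P_norm ip X = sqrt (P_inner ip X X)"
definition P_ext :: "('f \<Rightarrow> real) \<Rightarrow> (nat \<Rightarrow> 'f) \<Rightarrow> real" where
  "P_ext l Y = lim (\<lambda>n. l (Y n))"

definition rhs_functional :: "real \<Rightarrow> (real \<Rightarrow> real) \<Rightarrow> (real \<times> real \<Rightarrow> real) \<Rightarrow> (real \<times> real \<Rightarrow> real) \<Rightarrow> real" where
  "rhs_functional T z0 B q = (LINT x:Omega|lebesgue. z0 x * q (x, 0)) + (LINT y:QT T|lebesgue. B y * q y)"

end

theory Submission
  imports Defs
begin

lemma discr:
  fixes a b c :: real
  assumes "\<And>t. 0 \<le> a + 2 * t * b + t\<^sup>2 * c" "a \<ge> 0" "c \<ge> 0"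
  shows "b\<^sup>2 \<le> a * c"
proof (cases "c = 0")
  case True
  show ?thesis
  proof (rule ccontr)
    assume "\<not> ?thesis"
    then have "b \<noteq> 0" using True by simp
    have "0 \<le> a + 2 * (-(a+1)/(2*b)) * b" using assms(1)[of "-(a+1)/(2*b)"] True by simp
    also have "\<dots> = -1" using \<open>b \<noteq> 0\<close> by (simp add: field_simps)
    finally show False by simp
  qed
next
  case False
  then have c: "c > 0" using assms by simp
  have "0 \<le> a + 2 * (-b/c) * b + (-b/c)\<^sup>2 * c" by (rule assms(1))
  also have "\<dots> = a - b\<^sup>2 / c" using c by (simp add: field_simps power2_eq_square)
  finally show ?thesis using c by (simp add: field_simps)
qed

lemma discr_abs:
  fixes a b c :: real
  assumes "\<And>t. 0 \<le> a + 2 * t * b + t\<^sup>2 * c" "a \<ge> 0" "c \<ge> 0"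
  shows "\<bar>b\<bar> \<le> sqrt a * sqrt c"
proof -
  have "\<bar>b\<bar> = sqrt (b\<^sup>2)" by simp
  also have "\<dots> \<le> sqrt (a * c)" using discr[OF assms] by (simp only: real_sqrt_le_iff)
  finally show ?thesis by (simp add: real_sqrt_mult)
qed

definition lc :: "real \<Rightarrow> ('a \<Rightarrow> real) \<Rightarrow> real \<Rightarrow> ('a \<Rightarrow> real) \<Rightarrow> 'a \<Rightarrow> real" where
  "lc a u b v = (\<lambda>y. a * u y + b * v y)"

locale semi_ip =
  fixes S :: "('a \<Rightarrow> real) set" and ip :: "('a \<Rightarrow> real) \<Rightarrow> ('a \<Rightarrow> real) \<Rightarrow> real"
  assumes S0: "(\<lambda>_. 0) \<in> S"
    and Slin: "\<And>u v a b. u \<in> S \<Longrightarrow> v \<in> S \<Longrightarrow> lc a u b v \<in> S"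
    and ip_sym: "\<And>u v. u \<in> S \<Longrightarrow> v \<in> S \<Longrightarrow> ip u v = ip v u"
    and ip_lin: "\<And>u v w a b. u \<in> S \<Longrightarrow> v \<in> S \<Longrightarrow> w \<in> S \<Longrightarrow> ip (lc a u b v) w = a * ip u w + b * ip v w"
    and ip_pos: "\<And>u. u \<in> S \<Longrightarrow> ip u u \<ge> 0"
begin

definition nrm where "nrm u = sqrt (ip u u)"

lemma minus_lc: "u - v = lc 1 u (-1) v"
  by (auto simp: lc_def fun_eq_iff)

lemma Sminus: "u \<in> S \<Longrightarrow> v \<in> S \<Longrightarrow> u - v \<in> S"
  by (simp add: minus_lc Slin)

lemma ip_lin2: "u \<in> S \<Longrightarrow> v \<in> S \<Longrightarrow> w \<in> S \<Longrightarrow> ip w (lc a u b v) = a * ip w u + b * ip w v"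
  using ip_sym ip_lin Slin by metis

lemma ip_minus: "u \<in> S \<Longrightarrow> v \<in> S \<Longrightarrow> w \<in> S \<Longrightarrow> ip (u - v) w = ip u w - ip v w"
  by (simp add: minus_lc ip_lin)

lemma ip_minus2: "u \<in> S \<Longrightarrow> v \<in> S \<Longrightarrow> w \<in> S \<Longrightarrow> ip w (u - v) = ip w u - ip w v"
  by (simp add: minus_lc ip_lin2)

lemma nrm_nonneg: "u \<in> S \<Longrightarrow> nrm u \<ge> 0" by (simp add: nrm_def ip_pos)

lemma ip_expand: "u \<in> S \<Longrightarrow> v \<in> S \<Longrightarrow>
   ip (lc a u b v) (lc a u b v) = a\<^sup>2 * ip u u + 2 * a * b * ip u v + b\<^sup>2 * ip v v"
  using ip_lin ip_lin2 Slin ip_sym[of u v]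
  by (simp add: algebra_simps power2_eq_square)

lemma CS: assumes "u \<in> S" "v \<in> S" shows "\<bar>ip u v\<bar> \<le> nrm u * nrm v"
proof -
  have "\<And>t. 0 \<le> ip u u + 2 * t * ip u v + t\<^sup>2 * ip v v"
  proof -
    fix t
    have "0 \<le> ip (lc 1 u t v) (lc 1 u t v)" using assms Slin ip_pos by blast
    then show "0 \<le> ip u u + 2 * t * ip u v + t\<^sup>2 * ip v v" using ip_expand[OF assms, of 1 t] by simp
  qed
  then show ?thesis unfolding nrm_def using discr_abs ip_pos assms by blast
qed

lemma nrm_lc: assumes "u \<in> S" "v \<in> S" shows "nrm (lc 1 u t v) \<le> nrm u + \<bar>t\<bar> * nrm v"
proof -
  have "ip (lc 1 u t v) (lc 1 u t v) = ip u u + 2 * t * ip u v + t\<^sup>2 * ip v v"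
    using ip_expand[OF assms, of 1 t] by simp
  also have "\<dots> \<le> (nrm u)\<^sup>2 + 2 * \<bar>t\<bar> * (nrm u * nrm v) + t\<^sup>2 * (nrm v)\<^sup>2"
  proof -
    have "2 * t * ip u v \<le> 2 * \<bar>t\<bar> * (nrm u * nrm v)"
    proof -
      have "t * ip u v \<le> \<bar>t\<bar> * \<bar>ip u v\<bar>" by (metis abs_ge_self abs_mult)
      also have "\<dots> \<le> \<bar>t\<bar> * (nrm u * nrm v)" using CS[OF assms] by (intro mult_left_mono) auto
      finally show ?thesis by simp
    qed
    then show ?thesis using assms ip_pos by (simp add: nrm_def)
  qed
  also have "\<dots> = (nrm u + \<bar>t\<bar> * nrm v)\<^sup>2" by (simp add: power2_eq_square algebra_simps)
  finally have h: "ip (lc 1 u t v) (lc 1 u t v) \<le> (nrm u + \<bar>t\<bar> * nrm v)\<^sup>2" .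
  have "nrm u + \<bar>t\<bar> * nrm v \<ge> 0" using nrm_nonneg assms by simp
  then show ?thesis unfolding nrm_def[of "lc 1 u t v"] using h by (rule real_le_lsqrt)
qed

lemma nrm_tri: "u \<in> S \<Longrightarrow> v \<in> S \<Longrightarrow> w \<in> S \<Longrightarrow> nrm (u - w) \<le> nrm (u - v) + nrm (v - w)"
proof -
  assume a: "u \<in> S" "v \<in> S" "w \<in> S"
  have "u - w = lc 1 (u - v) 1 (v - w)" by (auto simp: lc_def fun_eq_iff)
  then show ?thesis using nrm_lc[of "u - v" "v - w" 1] a Sminus by simp
qed

lemma nrm_minus_le: "u \<in> S \<Longrightarrow> v \<in> S \<Longrightarrow> nrm (u - v) \<le> nrm u + nrm v"
  using nrm_lc[of u v "-1"] by (simp add: minus_lc)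

lemma nrm_le: "u \<in> S \<Longrightarrow> v \<in> S \<Longrightarrow> nrm u \<le> nrm v + nrm (u - v)"
proof -
  assume a: "u \<in> S" "v \<in> S"
  have "u = lc 1 v 1 (u - v)" by (auto simp: lc_def fun_eq_iff)
  then show ?thesis using nrm_lc[of v "u - v" 1] a Sminus by simp
qed

lemma cauchy_nrm: "P_Cauchy S ip X \<longleftrightarrow> (\<forall>n. X n \<in> S) \<and> (\<forall>e>0. \<exists>N. \<forall>m\<ge>N. \<forall>n\<ge>N. nrm (X m - X n) < e)"
  by (simp add: P_Cauchy_def nrm_def)

lemma cauchy_bounded: assumes "P_Cauchy S ip X" shows "\<exists>B. \<forall>n. nrm (X n) \<le> B"
proof -
  from assms obtain N where N: "\<forall>m\<ge>N. \<forall>n\<ge>N. nrm (X m - X n) < 1" and XS: "\<forall>n. X n \<in> S"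
    unfolding cauchy_nrm by (meson zero_less_one)
  have "nrm (X n) \<le> (\<Sum>k\<le>N. nrm (X k)) + 1" for n
  proof (cases "n \<le> N")
    case True
    then have "nrm (X n) \<le> (\<Sum>k\<le>N. nrm (X k))"
      by (intro member_le_sum) (auto simp: nrm_nonneg XS)
    then show ?thesis by simp
  next
    case False
    have "nrm (X n) \<le> nrm (X N) + nrm (X n - X N)" using nrm_le XS by blast
    moreover have "nrm (X n - X N) < 1" using N False by simp
    moreover have "nrm (X N) \<le> (\<Sum>k\<le>N. nrm (X k))"
      by (intro member_le_sum) (auto simp: nrm_nonneg XS)
    ultimately show ?thesis by simp
  qed
  then show ?thesis by blast
qed

lemma cauchy_ip_conv: assumes X: "P_Cauchy S ip X" and Y: "P_Cauchy S ip Y"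
  shows "convergent (\<lambda>n. ip (X n) (Y n))"
proof -
  obtain BX where BX: "\<forall>n. nrm (X n) \<le> BX" using cauchy_bounded[OF X] by blast
  obtain BY where BY: "\<forall>n. nrm (Y n) \<le> BY" using cauchy_bounded[OF Y] by blast
  have XS: "\<And>n. X n \<in> S" and YS: "\<And>n. Y n \<in> S" using X Y by (auto simp: cauchy_nrm)
  have BX0: "BX \<ge> 0" using BX[rule_format, of 0] nrm_nonneg[OF XS[of 0]] by linarith
  have BY0: "BY \<ge> 0" using BY[rule_format, of 0] nrm_nonneg[OF YS[of 0]] by linarith
  have "Cauchy (\<lambda>n. ip (X n) (Y n))"
    unfolding Cauchy_def
  proof (intro allI impI)
    fix e :: real assume e: "e > 0"
    define d where "d = e / (2 * (BX + BY + 1))"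
    have d: "d > 0" using e BX0 BY0 by (simp add: d_def)
    obtain N1 where N1: "\<forall>m\<ge>N1. \<forall>n\<ge>N1. nrm (X m - X n) < d" using X d unfolding cauchy_nrm by blast
    obtain N2 where N2: "\<forall>m\<ge>N2. \<forall>n\<ge>N2. nrm (Y m - Y n) < d" using Y d unfolding cauchy_nrm by blast
    show "\<exists>M. \<forall>m\<ge>M. \<forall>n\<ge>M. dist (ip (X m) (Y m)) (ip (X n) (Y n)) < e"
    proof (intro exI allI impI)
      fix m n assume mn: "max N1 N2 \<le> m" "max N1 N2 \<le> n"
      have eq: "ip (X m) (Y m) - ip (X n) (Y n) = ip (X m - X n) (Y m) + ip (X n) (Y m - Y n)"
        using ip_minus[OF XS[of m] XS[of n] YS[of m]] ip_minus2[OF YS[of m] YS[of n] XS[of n]] by simp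
      have "\<bar>ip (X m - X n) (Y m)\<bar> \<le> nrm (X m - X n) * nrm (Y m)" by (rule CS[OF Sminus[OF XS XS] YS])
      also have "\<dots> \<le> d * BY"
      proof -
        have a: "nrm (X m - X n) < d" using N1 mn by simp
        show ?thesis by (rule mult_mono[OF less_imp_le[OF a] BY[rule_format] less_imp_le[OF d] nrm_nonneg[OF YS]])
      qed
      finally have 1: "\<bar>ip (X m - X n) (Y m)\<bar> \<le> d * BY" .
      have "\<bar>ip (X n) (Y m - Y n)\<bar> \<le> nrm (X n) * nrm (Y m - Y n)" by (rule CS[OF XS Sminus[OF YS YS]])
      also have "\<dots> \<le> BX * d"
      proof -
        have a: "nrm (Y m - Y n) < d" using N2 mn by simp
        show ?thesis by (rule mult_mono[OF BX[rule_format] less_imp_le[OF a] BX0 nrm_nonneg[OF Sminus[OF YS YS]]])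
      qed
      finally have 2: "\<bar>ip (X n) (Y m - Y n)\<bar> \<le> BX * d" .
      have "d * BY + BX * d < e"
      proof -
        have pos: "2 * (BX + BY + 1) > 0" using BX0 BY0 by simp
        have h: "d * (BX + BY + 1) = e / 2" unfolding d_def using pos by (simp add: field_simps)
        have "d * BY + BX * d = d * (BX + BY + 1) - d" by (simp add: algebra_simps)
        then show ?thesis using h d e by linarith
      qed
      then show "dist (ip (X m) (Y m)) (ip (X n) (Y n)) < e"
        using 1 2 eq by (simp add: dist_real_def)
    qed
  qed
  then show ?thesis by (simp add: Cauchy_convergent_iff)
qed


lemma riesz:
  fixes f :: "('a \<Rightarrow> real) \<Rightarrow> real" and M :: real
  assumes f_lin: "\<And>u v a b. u \<in> S \<Longrightarrow> v \<in> S \<Longrightarrow> f (lc a u b v) = a * f u + b * f v"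
    and f_bd: "\<And>u. u \<in> S \<Longrightarrow> \<bar>f u\<bar> \<le> M * nrm u"
    and M: "M \<ge> 0"
  shows "\<exists>X. P_Cauchy S ip X \<and> (\<forall>Y. P_Cauchy S ip Y \<longrightarrow> P_inner ip X Y = P_ext f Y)
     \<and> (\<forall>Y. P_Cauchy S ip Y \<and> (\<forall>Z. P_Cauchy S ip Z \<longrightarrow> P_inner ip Y Z = P_ext f Z) \<longrightarrow> P_equiv ip X Y)
     \<and> P_norm ip X \<le> M"
proof -
  have f_minus: "f (u - v) = f u - f v" if "u \<in> S" "v \<in> S" for u v
    using f_lin[OF that, of 1 "-1"] by (simp add: minus_lc)
  have f_conv: "convergent (\<lambda>n. f (Y n))" if Y: "P_Cauchy S ip Y" for Y
  proof -
    have YS: "\<forall>n. Y n \<in> S" using Y by (simp add: cauchy_nrm)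
    have "Cauchy (\<lambda>n. f (Y n))"
      unfolding Cauchy_def
    proof (intro allI impI)
      fix e :: real assume e: "e > 0"
      have ep: "e / (M + 1) > 0" using e M by simp
      obtain N where N: "\<forall>m\<ge>N. \<forall>n\<ge>N. nrm (Y m - Y n) < e / (M + 1)"
        using Y[unfolded cauchy_nrm] ep by blast
      show "\<exists>N. \<forall>m\<ge>N. \<forall>n\<ge>N. dist (f (Y m)) (f (Y n)) < e"
      proof (intro exI allI impI)
        fix m n assume "N \<le> m" "N \<le> n"
        then have h: "nrm (Y m - Y n) < e / (M + 1)" using N by simp
        have "dist (f (Y m)) (f (Y n)) = \<bar>f (Y m - Y n)\<bar>" using YS f_minus by (simp add: dist_real_def)
        also have "\<dots> \<le> M * nrm (Y m - Y n)" using f_bd YS Sminus by blast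
        also have "\<dots> \<le> M * (e / (M + 1))" using h M by (intro mult_left_mono) auto
        also have "\<dots> < e" using M e by (simp add: field_simps)
        finally show "dist (f (Y m)) (f (Y n)) < e" .
      qed
    qed
    then show ?thesis by (simp add: Cauchy_convergent_iff)
  qed
  define J where "J u = ip u u / 2 - f u" for u
  have Jlow: "J u \<ge> - M\<^sup>2 / 2" if "u \<in> S" for u
  proof -
    have "f u \<le> M * nrm u" using f_bd[OF that] by simp
    moreover have "ip u u = (nrm u)\<^sup>2" using ip_pos[OF that] by (simp add: nrm_def)
    moreover have "0 \<le> (nrm u - M)\<^sup>2" by simp
    ultimately show ?thesis unfolding J_def by (simp add: power2_eq_square algebra_simps)
  qed
  define m where "m = Inf (J ` S)"
  have bdd: "bdd_below (J ` S)" using Jlow by (auto intro!: bdd_belowI)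
  have Jm: "m \<le> J u" if "u \<in> S" for u unfolding m_def using bdd that by (simp add: cInf_lower)
  have "\<exists>u\<in>S. J u < m + 1 / (real n + 1)" for n
  proof -
    have "J ` S \<noteq> {}" using S0 by auto
    moreover have "m < m + 1 / (real n + 1)" by simp
    ultimately have "\<exists>x\<in>J ` S. x < m + 1 / (real n + 1)" unfolding m_def by (rule cInf_lessD)
    then show ?thesis by blast
  qed
  then obtain X where XS: "\<And>n. X n \<in> S" and XJ: "\<And>n. J (X n) < m + 1 / (real n + 1)" by metis
  have Jmid: "(nrm (u - v))\<^sup>2 / 4 = J u + J v - 2 * J (lc (1/2) u (1/2) v)" if "u \<in> S" "v \<in> S" for u v
  proof -
    have "(nrm (u - v))\<^sup>2 = ip (u - v) (u - v)" using ip_pos Sminus that by (simp add: nrm_def)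
    also have "\<dots> = ip u u - 2 * ip u v + ip v v"
      using that Sminus ip_minus ip_minus2 ip_sym[of u v] by simp
    finally have 1: "(nrm (u - v))\<^sup>2 = ip u u - 2 * ip u v + ip v v" .
    have 2: "ip (lc (1/2) u (1/2) v) (lc (1/2) u (1/2) v) = (ip u u + 2 * ip u v + ip v v) / 4"
      using ip_expand[OF that, of "1/2" "1/2"] by (simp add: power2_eq_square field_simps)
    have 3: "f (lc (1/2) u (1/2) v) = (f u + f v) / 2" using f_lin[OF that] by simp
    show ?thesis unfolding J_def using 1 2 3 by (simp add: field_simps)
  qed
  have XC: "P_Cauchy S ip X"
    unfolding cauchy_nrm
  proof (intro conjI allI impI)
    show "X n \<in> S" for n by (rule XS)
    fix e :: real assume e: "e > 0"
    obtain N :: nat where N: "8 / e\<^sup>2 < real N" using reals_Archimedean2 by blast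
    show "\<exists>N. \<forall>m\<ge>N. \<forall>n\<ge>N. nrm (X m - X n) < e"
    proof (intro exI allI impI)
      fix i j assume ij: "N \<le> i" "N \<le> j"
      have "(nrm (X i - X j))\<^sup>2 / 4 = J (X i) + J (X j) - 2 * J (lc (1/2) (X i) (1/2) (X j))"
        using Jmid XS by blast
      also have "\<dots> \<le> 1 / (real i + 1) + 1 / (real j + 1)"
        using XJ[of i] XJ[of j] Jm[OF Slin[OF XS[of i] XS[of j]], of "1/2" "1/2"] by linarith
      also have "\<dots> \<le> 2 / (real N + 1)"
      proof -
        have "1 / (real i + 1) \<le> 1 / (real N + 1)" using ij by (simp add: frac_le)
        moreover have "1 / (real j + 1) \<le> 1 / (real N + 1)" using ij by (simp add: frac_le)
        ultimately show ?thesis by simp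
      qed
      finally have h: "(nrm (X i - X j))\<^sup>2 \<le> 8 / (real N + 1)" by simp
      have "8 / (real N + 1) < e\<^sup>2"
      proof -
        have "8 / e\<^sup>2 < real N + 1" using N by simp
        then show ?thesis using e by (simp add: field_simps)
      qed
      then have "(nrm (X i - X j))\<^sup>2 < e\<^sup>2" using h by simp
      then show "nrm (X i - X j) < e" using e by (simp add: power_less_imp_less_base)
    qed
  qed
  have var: "\<bar>ip (X n) q - f q\<bar> \<le> sqrt (2 / (real n + 1)) * nrm q" if q: "q \<in> S" for n q
  proof -
    define eps where "eps = J (X n) - m"
    have eps0: "eps \<ge> 0" using Jm XS by (simp add: eps_def)
    have epsle: "eps \<le> 1 / (real n + 1)" using XJ[of n] by (simp add: eps_def)
    have quad: "\<And>t::real. 0 \<le> eps + 2 * t * ((ip (X n) q - f q) / 2) + t\<^sup>2 * (ip q q / 2)"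
    proof -
      fix t :: real
      have "m \<le> J (lc 1 (X n) t q)" using Jm Slin XS q by blast
      moreover have "J (lc 1 (X n) t q) = J (X n) + t * (ip (X n) q - f q) + t\<^sup>2 * ip q q / 2"
        unfolding J_def using ip_expand[OF XS[of n] q, of 1 t] f_lin[OF XS[of n] q, of 1 t]
        by (simp add: field_simps)
      ultimately show "0 \<le> eps + 2 * t * ((ip (X n) q - f q) / 2) + t\<^sup>2 * (ip q q / 2)"
        by (simp add: eps_def field_simps)
    qed
    have "\<bar>(ip (X n) q - f q) / 2\<bar> \<le> sqrt eps * sqrt (ip q q / 2)"
      by (rule discr_abs[OF quad eps0]) (simp add: ip_pos[OF q])
    then have "\<bar>ip (X n) q - f q\<bar> \<le> 2 * sqrt eps * sqrt (ip q q / 2)" by simp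
    also have "2 * sqrt eps * sqrt (ip q q / 2) = sqrt (2 * eps) * nrm q"
    proof -
      have s2: "sqrt 2 * sqrt 2 = (2::real)" by simp
      show ?thesis by (simp add: nrm_def real_sqrt_mult real_sqrt_divide field_simps)
    qed
    also have "\<dots> \<le> sqrt (2 / (real n + 1)) * nrm q"
      using epsle nrm_nonneg[OF q] by (intro mult_right_mono) auto
    finally show ?thesis .
  qed
  have conv: "(\<lambda>n. ip (X n) (Y n)) \<longlonglongrightarrow> lim (\<lambda>n. f (Y n))" if Y: "P_Cauchy S ip Y" for Y
  proof -
    have YS: "\<forall>n. Y n \<in> S" using Y by (simp add: cauchy_nrm)
    obtain B where B: "\<forall>n. nrm (Y n) \<le> B" using cauchy_bounded[OF Y] by blast
    have fY: "(\<lambda>n. f (Y n)) \<longlonglongrightarrow> lim (\<lambda>n. f (Y n))" using f_conv[OF Y] convergent_LIMSEQ_iff by blast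
    have s0: "(\<lambda>n. sqrt (2 / (real n + 1)) * B) \<longlonglongrightarrow> 0"
    proof -
      have "(\<lambda>n. 2 * inverse (real (Suc n))) \<longlonglongrightarrow> 0"
        by (rule tendsto_mult_right_zero[OF LIMSEQ_inverse_real_of_nat])
      then have "(\<lambda>n. 2 / (real n + 1)) \<longlonglongrightarrow> 0"
        by (simp add: divide_inverse add.commute)
      then have "(\<lambda>n. sqrt (2 / (real n + 1))) \<longlonglongrightarrow> sqrt 0" by (rule tendsto_real_sqrt)
      then have "(\<lambda>n. sqrt (2 / (real n + 1))) \<longlonglongrightarrow> 0" by simp
      then show ?thesis by (rule tendsto_mult_left_zero)
    qed
    have "(\<lambda>n. ip (X n) (Y n) - f (Y n)) \<longlonglongrightarrow> 0"
    proof (rule Lim_null_comparison[OF _ s0])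
      show "\<forall>\<^sub>F n in sequentially. norm (ip (X n) (Y n) - f (Y n)) \<le> sqrt (2 / (real n + 1)) * B"
      proof (intro always_eventually allI)
        fix n
        have "\<bar>ip (X n) (Y n) - f (Y n)\<bar> \<le> sqrt (2 / (real n + 1)) * nrm (Y n)" using var YS by blast
        also have "\<dots> \<le> sqrt (2 / (real n + 1)) * B" using B by (intro mult_left_mono) auto
        finally show "norm (ip (X n) (Y n) - f (Y n)) \<le> sqrt (2 / (real n + 1)) * B" by simp
      qed
    qed
    from tendsto_add[OF this fY] show ?thesis by simp
  qed
  have solves: "P_inner ip X Y = P_ext f Y" if "P_Cauchy S ip Y" for Y
    using conv[OF that] by (simp add: P_inner_def P_ext_def limI)
  have uniq: "P_equiv ip X Y" if Y: "P_Cauchy S ip Y" and Ys: "\<forall>Z. P_Cauchy S ip Z \<longrightarrow> P_inner ip Y Z = P_ext f Z" for Y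
  proof -
    define D where "D n = X n - Y n" for n
    have YS: "\<And>n. Y n \<in> S" using Y by (simp add: cauchy_nrm)
    have DS: "\<And>n. D n \<in> S" using XS YS Sminus by (simp add: D_def)
    have DC: "P_Cauchy S ip D"
      unfolding cauchy_nrm
    proof (intro conjI allI impI)
      show "D n \<in> S" for n by (rule DS)
      fix e :: real assume e: "e > 0"
      obtain N1 where N1: "\<forall>m\<ge>N1. \<forall>n\<ge>N1. nrm (X m - X n) < e/2" using XC e unfolding cauchy_nrm by (meson half_gt_zero)
      obtain N2 where N2: "\<forall>m\<ge>N2. \<forall>n\<ge>N2. nrm (Y m - Y n) < e/2" using Y e unfolding cauchy_nrm by (meson half_gt_zero)
      show "\<exists>N. \<forall>m\<ge>N. \<forall>n\<ge>N. nrm (D m - D n) < e"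
      proof (intro exI allI impI)
        fix i j assume ij: "max N1 N2 \<le> i" "max N1 N2 \<le> j"
        have "D i - D j = (X i - X j) - (Y i - Y j)" by (simp add: D_def fun_eq_iff)
        then have "nrm (D i - D j) \<le> nrm (X i - X j) + nrm (Y i - Y j)"
          using nrm_minus_le Sminus XS YS by simp
        moreover have "nrm (X i - X j) < e/2" using N1 ij by simp
        moreover have "nrm (Y i - Y j) < e/2" using N2 ij by simp
        ultimately show "nrm (D i - D j) < e" by linarith
      qed
    qed
    obtain L1 where L1: "(\<lambda>n. ip (X n) (D n)) \<longlonglongrightarrow> L1" using cauchy_ip_conv[OF XC DC] convergent_def by blast
    obtain L2 where L2: "(\<lambda>n. ip (Y n) (D n)) \<longlonglongrightarrow> L2" using cauchy_ip_conv[OF Y DC] convergent_def by blast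
    have "L1 = P_ext f D" using solves[OF DC] L1 by (simp add: P_inner_def limI)
    moreover have "L2 = P_ext f D"
    proof -
      have "P_inner ip Y D = P_ext f D" using Ys DC by blast
      then show ?thesis using L2 by (simp add: P_inner_def limI)
    qed
    ultimately have "L1 = L2" by simp
    have "(\<lambda>n. ip (D n) (D n)) \<longlonglongrightarrow> L1 - L2"
    proof -
      have "ip (D n) (D n) = ip (X n) (D n) - ip (Y n) (D n)" for n
        using ip_minus[OF XS[of n] YS[of n] DS[of n]] by (simp add: D_def)
      then show ?thesis using tendsto_diff[OF L1 L2] by simp
    qed
    then have "(\<lambda>n. ip (D n) (D n)) \<longlonglongrightarrow> 0" using \<open>L1 = L2\<close> by simp
    then have "(\<lambda>n. sqrt (ip (D n) (D n))) \<longlonglongrightarrow> sqrt 0" by (rule tendsto_real_sqrt)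
    then show ?thesis by (simp add: P_equiv_def D_def)
  qed
  have norm: "P_norm ip X \<le> M"
  proof -
    define L where "L = lim (\<lambda>n. f (X n))"
    have c1: "(\<lambda>n. ip (X n) (X n)) \<longlonglongrightarrow> L" using conv[OF XC] by (simp add: L_def)
    have c2: "(\<lambda>n. f (X n)) \<longlonglongrightarrow> L" using f_conv[OF XC] convergent_LIMSEQ_iff L_def by blast
    have L0: "L \<ge> 0" using c1 ip_pos XS by (intro LIMSEQ_le_const) auto
    have c3: "(\<lambda>n. M * sqrt (ip (X n) (X n))) \<longlonglongrightarrow> M * sqrt L" using c1 by (intro tendsto_intros)
    have "L \<le> M * sqrt L"
      using c2 c3 by (rule LIMSEQ_le) (use f_bd XS in \<open>auto simp: nrm_def intro: order_trans[OF abs_ge_self]\<close>)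
    then have "sqrt L \<le> M"
    proof (cases "L = 0")
      case True then show ?thesis using M by simp
    next
      case False
      then have "sqrt L > 0" using L0 by simp
      moreover have "sqrt L * sqrt L \<le> M * sqrt L" using \<open>L \<le> M * sqrt L\<close> L0 by simp
      ultimately show ?thesis using mult_le_cancel_right_pos by blast
    qed
    moreover have "P_norm ip X = sqrt L" using c1 by (simp add: P_norm_def P_inner_def limI)
    ultimately show ?thesis by simp
  qed
  have u: "\<forall>Y. P_Cauchy S ip Y \<and> (\<forall>Z. P_Cauchy S ip Z \<longrightarrow> P_inner ip Y Z = P_ext f Z) \<longrightarrow> P_equiv ip X Y"
    using uniq by blast
  have v: "\<forall>Y. P_Cauchy S ip Y \<longrightarrow> P_inner ip X Y = P_ext f Y" using solves by blast
  show ?thesis by (rule exI[of _ X]) (intro conjI XC u v norm)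
qed

end

lemma LINT_on: "S \<in> sets lebesgue \<Longrightarrow> (LINT y:S|lebesgue. f y) = integral\<^sup>L (lebesgue_on S) (f::_\<Rightarrow>real)"
  by (simp add: set_lebesgue_integral_def integral_restrict_space)

lemma sint_on: "S \<in> sets lebesgue \<Longrightarrow> set_integrable lebesgue S f \<longleftrightarrow> integrable (lebesgue_on S) (f::_\<Rightarrow>real)"
  by (simp add: set_integrable_def integrable_restrict_space)

lemma fin_on: assumes "S \<in> lmeasurable" shows "finite_measure (lebesgue_on S)"
proof -
  from assms have S: "S \<in> sets lebesgue" "emeasure lebesgue S < \<infinity>" by (auto simp: fmeasurable_def)
  have e: "emeasure (lebesgue_on S) S = emeasure lebesgue S"
    by (rule emeasure_restrict_space) (use S in auto)
  show ?thesis
  proof (rule finite_measureI)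
    show "emeasure (lebesgue_on S) (space (lebesgue_on S)) \<noteq> \<infinity>"
      using less_imp_neq[OF S(2)] e by (metis space_lebesgue_on)
  qed
qed

lemma QT_lmeas: "QT T \<in> lmeasurable"
  unfolding QT_def Omega_def
  by (intro lmeasurable_open bounded_Times open_Times) auto

lemma Omega_lmeas: "Omega \<in> lmeasurable"
  unfolding Omega_def by (intro lmeasurable_open) auto

lemma qT_lmeas: "open \<omega> \<Longrightarrow> closure \<omega> \<subseteq> Omega \<Longrightarrow> qT \<omega> T \<in> lmeasurable"
  unfolding qT_def
proof (intro lmeasurable_open bounded_Times open_Times)
  assume "open \<omega>" "closure \<omega> \<subseteq> Omega"
  then show "bounded \<omega>" using closure_subset[of \<omega>] bounded_subset[of Omega \<omega>]
    unfolding Omega_def by auto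
qed auto

lemma qT_sub: "closure \<omega> \<subseteq> Omega \<Longrightarrow> qT \<omega> T \<subseteq> QT T"
  unfolding qT_def QT_def using closure_subset by blast

lemma lmeas_sets: "S \<in> lmeasurable \<Longrightarrow> S \<in> sets lebesgue" by (simp add: fmeasurable_def)

lemma meas_cont: "continuous_on S f \<Longrightarrow> S \<in> lmeasurable \<Longrightarrow> f \<in> borel_measurable (lebesgue_on S)"
  by (rule continuous_imp_measurable_on_sets_lebesgue) (auto simp: fmeasurable_def)

lemma int_bdd:
  fixes f :: "_ \<Rightarrow> real"
  assumes "S \<in> lmeasurable" "f \<in> borel_measurable (lebesgue_on S)" "AE y in lebesgue_on S. \<bar>f y\<bar> \<le> B"
  shows "integrable (lebesgue_on S) f"
  using finite_measure.integrable_const_bound[OF fin_on[OF assms(1)], of f B] assms by simp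

lemma compact_bdd:
  fixes g :: "'a::euclidean_space \<Rightarrow> real"
  assumes "continuous_on UNIV g" "compact K"
  shows "\<exists>B. \<forall>y\<in>K. \<bar>g y\<bar> \<le> B"
proof -
  have "compact (g ` K)" using assms by (meson compact_continuous_image continuous_on_subset subset_UNIV)
  then obtain B where "\<forall>z\<in>g ` K. norm z \<le> B" using compact_imp_bounded bounded_iff by metis
  then show ?thesis by auto
qed

lemma QT_sub_cbox: "QT T \<subseteq> cbox (0,0) (1,T)"
  unfolding QT_def Omega_def by (auto simp: cbox_Pair_eq)

lemma cont_bdd_QT:
  assumes "continuous_on UNIV (g :: real \<times> real \<Rightarrow> real)"
  shows "\<exists>B. \<forall>y\<in>QT T. \<bar>g y\<bar> \<le> B"
  using compact_bdd[OF assms compact_cbox[of "(0::real,0::real)" "(1,T)"]] QT_sub_cbox by blast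

lemma cont_bdd_Omega:
  assumes "continuous_on UNIV (g :: real \<times> real \<Rightarrow> real)"
  shows "\<exists>B. \<forall>x\<in>Omega. \<bar>g (x, 0)\<bar> \<le> B"
proof -
  obtain B where "\<forall>y\<in>cbox (0,0) (1,0). \<bar>g y\<bar> \<le> B"
    using compact_bdd[OF assms compact_cbox[of "(0::real,0::real)" "(1,0)"]] by blast
  then have "\<forall>x\<in>Omega. \<bar>g (x, 0)\<bar> \<le> B" unfolding Omega_def by (auto simp: cbox_Pair_eq)
  then show ?thesis by blast
qed

lemma CS_int:
  fixes g h :: "_ \<Rightarrow> real"
  assumes g: "g \<in> borel_measurable N" "integrable N (\<lambda>y. (g y)\<^sup>2)"
    and h: "h \<in> borel_measurable N" "integrable N (\<lambda>y. (h y)\<^sup>2)"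
  shows "integrable N (\<lambda>y. g y * h y)"
    and "\<bar>integral\<^sup>L N (\<lambda>y. g y * h y)\<bar> \<le> sqrt (integral\<^sup>L N (\<lambda>y. (g y)\<^sup>2)) * sqrt (integral\<^sup>L N (\<lambda>y. (h y)\<^sup>2))"
proof -
  have b: "\<bar>g y * h y\<bar> \<le> (g y)\<^sup>2 + (h y)\<^sup>2" for y
  proof -
    have "0 \<le> (\<bar>g y\<bar> - \<bar>h y\<bar>)\<^sup>2" by simp
    also have "(\<bar>g y\<bar> - \<bar>h y\<bar>)\<^sup>2 = (g y)\<^sup>2 + (h y)\<^sup>2 - 2 * (\<bar>g y\<bar> * \<bar>h y\<bar>)"
      by (simp add: power2_eq_square algebra_simps)
    finally have "2 * (\<bar>g y\<bar> * \<bar>h y\<bar>) \<le> (g y)\<^sup>2 + (h y)\<^sup>2" by simp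
    moreover have "\<bar>g y * h y\<bar> = \<bar>g y\<bar> * \<bar>h y\<bar>" by (rule abs_mult)
    moreover have "0 \<le> \<bar>g y\<bar> * \<bar>h y\<bar>" by simp
    ultimately show ?thesis by linarith
  qed
  show gh: "integrable N (\<lambda>y. g y * h y)"
    by (rule Bochner_Integration.integrable_bound[OF Bochner_Integration.integrable_add[OF g(2) h(2)]])
       (use g h b in auto)
  have quad: "\<And>t. 0 \<le> integral\<^sup>L N (\<lambda>y. (g y)\<^sup>2) + 2 * t * integral\<^sup>L N (\<lambda>y. g y * h y) + t\<^sup>2 * integral\<^sup>L N (\<lambda>y. (h y)\<^sup>2)"
  proof -
    fix t :: real
    have i1: "integrable N (\<lambda>y. (2 * t) * (g y * h y))" using gh by simp
    have i2: "integrable N (\<lambda>y. t\<^sup>2 * (h y)\<^sup>2)" using h(2) by simp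
    have "0 \<le> integral\<^sup>L N (\<lambda>y. (g y + t * h y)\<^sup>2)" by (intro integral_nonneg_AE AE_I2) simp
    also have "integral\<^sup>L N (\<lambda>y. (g y + t * h y)\<^sup>2) = integral\<^sup>L N (\<lambda>y. (g y)\<^sup>2 + (2 * t) * (g y * h y) + t\<^sup>2 * (h y)\<^sup>2)"
      by (simp add: power2_eq_square algebra_simps)
    also have "\<dots> = integral\<^sup>L N (\<lambda>y. (g y)\<^sup>2 + (2 * t) * (g y * h y)) + integral\<^sup>L N (\<lambda>y. t\<^sup>2 * (h y)\<^sup>2)"
      by (rule Bochner_Integration.integral_add[OF Bochner_Integration.integrable_add[OF g(2) i1] i2])
    also have "integral\<^sup>L N (\<lambda>y. (g y)\<^sup>2 + (2 * t) * (g y * h y)) = integral\<^sup>L N (\<lambda>y. (g y)\<^sup>2) + integral\<^sup>L N (\<lambda>y. (2 * t) * (g y * h y))"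
      by (rule Bochner_Integration.integral_add[OF g(2) i1])
    also have "integral\<^sup>L N (\<lambda>y. (2 * t) * (g y * h y)) = 2 * t * integral\<^sup>L N (\<lambda>y. g y * h y)"
      by (rule integral_mult_right_zero)
    also have "integral\<^sup>L N (\<lambda>y. t\<^sup>2 * (h y)\<^sup>2) = t\<^sup>2 * integral\<^sup>L N (\<lambda>y. (h y)\<^sup>2)"
      by (rule integral_mult_right_zero)
    finally show "0 \<le> integral\<^sup>L N (\<lambda>y. (g y)\<^sup>2) + 2 * t * integral\<^sup>L N (\<lambda>y. g y * h y) + t\<^sup>2 * integral\<^sup>L N (\<lambda>y. (h y)\<^sup>2)" .
  qed
  have p1: "0 \<le> integral\<^sup>L N (\<lambda>y. (g y)\<^sup>2)" by (intro integral_nonneg_AE AE_I2) simp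
  have p2: "0 \<le> integral\<^sup>L N (\<lambda>y. (h y)\<^sup>2)" by (intro integral_nonneg_AE AE_I2) simp
  show "\<bar>integral\<^sup>L N (\<lambda>y. g y * h y)\<bar> \<le> sqrt (integral\<^sup>L N (\<lambda>y. (g y)\<^sup>2)) * sqrt (integral\<^sup>L N (\<lambda>y. (h y)\<^sup>2))"
    by (rule discr_abs[OF quad p1 p2])
qed

lemma deriv_lc:
  fixes f g :: "real \<Rightarrow> real"
  assumes "f differentiable (at x)" "g differentiable (at x)"
  shows "deriv (\<lambda>x'. a * f x' + b * g x') x = a * deriv f x + b * deriv g x"
proof -
  have "(f has_real_derivative deriv f x) (at x)" "(g has_real_derivative deriv g x) (at x)"
    using assms by (auto simp: DERIV_deriv_iff_real_differentiable)
  then have "((\<lambda>x'. a * f x' + b * g x') has_real_derivative a * deriv f x + b * deriv g x) (at x)"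
    by (auto intro!: derivative_eq_intros)
  then show ?thesis by (rule DERIV_imp_deriv)
qed

lemma partials_lc:
  assumes "partials_exist p" "partials_exist q"
  shows "partials_exist (lc a p b q)" "dx (lc a p b q) = lc a (dx p) b (dx q)" "dt (lc a p b q) = lc a (dt p) b (dt q)"
proof -
  show "partials_exist (lc a p b q)"
    using assms unfolding partials_exist_def lc_def
    by (auto intro!: differentiable_add differentiable_mult differentiable_const)
  show "dx (lc a p b q) = lc a (dx p) b (dx q)"
    using assms unfolding partials_exist_def lc_def dx_def
    by (auto simp: fun_eq_iff intro!: deriv_lc)
  show "dt (lc a p b q) = lc a (dt p) b (dt q)"
    using assms unfolding partials_exist_def lc_def dt_def
    by (auto simp: fun_eq_iff intro!: deriv_lc)
qed

lemma cont_lc: "continuous_on UNIV f \<Longrightarrow> continuous_on UNIV g \<Longrightarrow> continuous_on UNIV (lc a f b g)"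
  unfolding lc_def by (intro continuous_intros) auto

lemma C2_lc: assumes "C2 p" "C2 q" shows "C2 (lc a p b q)"
    and "dx (dx (lc a p b q)) = lc a (dx (dx p)) b (dx (dx q))"
    and "dt (lc a p b q) = lc a (dt p) b (dt q)"
proof -
  have pp: "partials_exist p" "partials_exist q" "partials_exist (dx p)" "partials_exist (dx q)"
     "partials_exist (dt p)" "partials_exist (dt q)" using assms by (auto simp: C2_def)
  note e1 = partials_lc(2,3)[OF pp(1,2)]
  note e2 = partials_lc(2,3)[OF pp(3,4)]
  note e3 = partials_lc(2,3)[OF pp(5,6)]
  have cp: "continuous_on UNIV p" "continuous_on UNIV q" "continuous_on UNIV (dx p)" "continuous_on UNIV (dx q)"
    "continuous_on UNIV (dt p)" "continuous_on UNIV (dt q)"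
    "continuous_on UNIV (dx (dx p))" "continuous_on UNIV (dx (dx q))"
    "continuous_on UNIV (dx (dt p))" "continuous_on UNIV (dx (dt q))"
    "continuous_on UNIV (dt (dx p))" "continuous_on UNIV (dt (dx q))"
    "continuous_on UNIV (dt (dt p))" "continuous_on UNIV (dt (dt q))"
    using assms unfolding C2_def by auto
  show "C2 (lc a p b q)"
    unfolding C2_def e1 e2 e3
    by (intro conjI cont_lc partials_lc(1) pp cp)
  show "dx (dx (lc a p b q)) = lc a (dx (dx p)) b (dx (dx q))" unfolding e1 e2 ..
  show "dt (lc a p b q) = lc a (dt p) b (dt q)" by (rule e1(2))
qed

lemma P0_lc: "p \<in> P0 T \<Longrightarrow> q \<in> P0 T \<Longrightarrow> lc a p b q \<in> P0 T"
  unfolding P0_def using C2_lc(1) by (auto simp: lc_def)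

lemma P0_zero: "(\<lambda>_. 0) \<in> P0 T"
proof -
  have "(\<lambda>_::real\<times>real. 0::real) = lc 0 (\<lambda>_. 0) 0 (\<lambda>_. 0)" by (simp add: lc_def)
  have d: "dx (\<lambda>_. 0) = (\<lambda>_. 0)" "dt (\<lambda>_. 0) = (\<lambda>_. 0)" by (auto simp: dx_def dt_def fun_eq_iff)
  have "partials_exist (\<lambda>_. 0)" by (simp add: partials_exist_def)
  then show ?thesis by (simp add: P0_def C2_def d)
qed

lemma Lstar_lc: "C2 p \<Longrightarrow> C2 q \<Longrightarrow> Lstar A (lc a p b q) = lc a (Lstar A p) b (Lstar A q)"
  unfolding Lstar_def using C2_lc(2,3)[of p q a b] by (simp add: lc_def fun_eq_iff algebra_simps)

locale wt =
  fixes T T1 lam s :: real and psi :: "real \<Rightarrow> real" and th :: "real \<Rightarrow> real \<Rightarrow> real"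
  assumes T: "T > 0" "0 < T1" "T1 < min (1/4) (3 * T / 8)"
    and psic: "continuous_on {0..1} psi" and psib: "\<forall>x\<in>Omega. 0 < psi x \<and> psi x < 1"
    and th: "C2_on (th s) {0..<T}
       \<and> (\<forall>t\<in>{0..T/4}. th s t = 1 + (1 - 4 * t / T) powr (s * lam\<^sup>2 * exp (2 * lam)))
       \<and> (\<forall>t\<in>{T/4..T - 2 * T1}. th s t = 1)
       \<and> mono_on {T - 2 * T1..T - T1} (th s)
       \<and> (\<forall>t\<in>{T - T1..<T}. th s t = 1 / (T - t))"
    and lam: "lam \<ge> 1" and s: "s \<ge> 1"
begin

lemma th_pos: assumes "0 \<le> t" "t < T" shows "th s t > 0"
proof -
  have a: "T/4 \<le> T - 2 * T1" using T by simp
  consider "t \<le> T/4" | "T/4 \<le> t \<and> t \<le> T - 2*T1" | "T - 2*T1 \<le> t \<and> t \<le> T - T1" | "T - T1 \<le> t" by linarith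
  then show ?thesis
  proof cases
    case 1
    then have "th s t = 1 + (1 - 4 * t / T) powr (s * lam\<^sup>2 * exp (2 * lam))" using th assms by auto
    then show ?thesis using powr_ge_zero[of "1 - 4 * t / T" "s * lam\<^sup>2 * exp (2 * lam)"] by linarith
  next
    case 2 then show ?thesis using th by auto
  next
    case 3
    have c: "\<forall>t\<in>{T/4..T - 2 * T1}. th s t = 1" using th by blast
    have e1: "th s (T - 2*T1) = 1" using c a by simp
    have m: "mono_on {T - 2 * T1..T - T1} (th s)" using th by blast
    have "th s (T - 2*T1) \<le> th s t"
      by (rule mono_onD[OF m]) (use 3 T in auto)
    then show ?thesis using e1 by simp
  next
    case 4
    then have "th s t = 1 / (T - t)" using th assms by auto
    then show ?thesis using assms by simp
  qed
qed

lemma th0: "th s 0 = 2"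
  using th T by auto

lemma th_cont: "continuous_on {0..<T} (th s)"
proof -
  obtain f1 f2 where "\<forall>t\<in>{0..<T}. (th s has_real_derivative f1 t) (at t within {0..<T})"
    using th unfolding C2_on_def by blast
  then show ?thesis by (intro DERIV_continuous_on) auto
qed

definition kap where "kap = lam * exp (12 * lam) - exp (7 * lam)"

lemma kap_pos: "kap > 0"
proof -
  have "exp (7 * lam) < exp (12 * lam)" using lam by simp
  also have "\<dots> \<le> lam * exp (12 * lam)" using lam by simp
  finally show ?thesis by (simp add: kap_def)
qed

lemma epsi: assumes "x \<in> Omega" shows "exp (lam * psihat psi x) \<le> exp (7 * lam)"
proof -
  have "psi x + 6 \<le> 7" using psib assms by auto
  then have "lam * (psi x + 6) \<le> lam * 7" using lam by (intro mult_left_mono) auto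
  then show ?thesis by (simp add: psihat_def mult.commute)
qed

lemma phi_ge: assumes "x \<in> Omega" "th s t \<ge> 0"
  shows "phi th lam psi s (x, t) \<ge> th s t * kap"
  unfolding phi_def kap_def using epsi[OF assms(1)] assms(2) by (simp add: mult_left_mono)

lemma phi_le: assumes "x \<in> Omega" "th s t \<ge> 0"
  shows "phi th lam psi s (x, t) \<le> th s t * (lam * exp (12 * lam))"
  unfolding phi_def using assms(2) by (simp add: mult_left_mono)

lemma QT_D: "y \<in> QT T \<Longrightarrow> fst y \<in> Omega" "y \<in> QT T \<Longrightarrow> 0 < snd y" "y \<in> QT T \<Longrightarrow> snd y < T"
  by (auto simp: QT_def)

lemma th_posQ: "y \<in> QT T \<Longrightarrow> th s (snd y) > 0"
  using th_pos[OF less_imp_le[OF QT_D(2)] QT_D(3)] by blast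

lemma phi_nonneg: "y \<in> QT T \<Longrightarrow> phi th lam psi s y \<ge> 0"
proof -
  assume y: "y \<in> QT T"
  then have "th s (snd y) > 0" by (rule th_posQ)
  then have "phi th lam psi s (fst y, snd y) \<ge> th s (snd y) * kap" by (intro phi_ge[OF QT_D(1)[OF y]]) simp
  then have "phi th lam psi s y \<ge> th s (snd y) * kap" by simp
  moreover have "th s (snd y) * kap \<ge> 0" using kap_pos \<open>th s (snd y) > 0\<close> by simp
  ultimately show ?thesis by simp
qed

lemma rho_ge1: "y \<in> QT T \<Longrightarrow> rho th lam psi s y \<ge> 1"
  unfolding rho_def using phi_nonneg s by simp

lemma w_bd: "y \<in> QT T \<Longrightarrow> 1 / (rho th lam psi s y)\<^sup>2 \<le> 1"
proof -
  assume "y \<in> QT T"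
  then have "rho th lam psi s y \<ge> 1" by (rule rho_ge1)
  then have "(rho th lam psi s y)\<^sup>2 \<ge> 1" by (simp add: one_le_power)
  then show ?thesis by (auto simp: divide_le_eq_1)
qed

lemma xi_pos: "y \<in> QT T \<Longrightarrow> xi th lam psi s y > 0"
  unfolding xi_def using th_posQ by simp

lemma rho0_pos: assumes "y \<in> QT T" shows "rho0 th lam psi s y > 0"
proof -
  have "xi th lam psi s y > 0" using xi_pos assms by blast
  then have "xi th lam psi s y powr (-3/2) > 0" by simp
  then show ?thesis unfolding rho0_def rho_def by simp
qed

definition Kw where "Kw = exp (21 * lam) * (3 / (2 * kap)) ^ 3"

lemma cubic: assumes "u \<ge> 0" shows "u ^ 3 * exp (- 2 * kap * u) \<le> (3 / (2 * kap)) ^ 3"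
proof -
  have "1 + 2 * kap * u / 3 \<le> exp (2 * kap * u / 3)" by (rule exp_ge_add_one_self)
  then have "2 * kap * u / 3 \<le> exp (2 * kap * u / 3)" by linarith
  then have "(2 * kap * u / 3) ^ 3 \<le> exp (2 * kap * u / 3) ^ 3"
    using assms kap_pos by (intro power_mono) auto
  also have "exp (2 * kap * u / 3) ^ 3 = exp (2 * kap * u)" by (simp add: exp_of_nat_mult[symmetric])
  finally have "(2 * kap / 3) ^ 3 * u ^ 3 \<le> exp (2 * kap * u)" by (simp add: power_mult_distrib power_divide)
  then have "u ^ 3 \<le> (3 / (2 * kap)) ^ 3 * exp (2 * kap * u)"
    using kap_pos by (simp add: field_simps power_divide)
  then show ?thesis by (simp add: exp_minus field_simps)
qed

lemma w0_bd: assumes y: "y \<in> QT T" shows "1 / (rho0 th lam psi s y)\<^sup>2 \<le> Kw"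
proof -
  define u where "u = th s (snd y)"
  have u: "u > 0" using th_posQ y by (auto simp: u_def)
  define xv where "xv = xi th lam psi s y"
  have xv: "xv > 0" using xi_pos y by (simp add: xv_def)
  have Xle: "xv \<le> u * exp (7 * lam)"
    unfolding xv_def xi_def u_def
    by (rule mult_left_mono[OF epsi[OF QT_D(1)[OF y]]]) (use u in \<open>simp add: u_def\<close>)
  define pv where "pv = phi th lam psi s y"
  have pv: "pv \<ge> u * kap" using phi_ge[OF QT_D(1)[OF y], of "snd y"] u by (auto simp: pv_def u_def)
  have "(rho0 th lam psi s y)\<^sup>2 = (xv powr (-3/2))\<^sup>2 * (exp (s * pv))\<^sup>2"
    by (simp add: rho0_def rho_def xv_def pv_def power_mult_distrib)
  also have "(xv powr (-3/2))\<^sup>2 = 1 / xv ^ 3"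
  proof -
    have "(xv powr (-3/2))\<^sup>2 = xv powr (-3/2) * xv powr (-3/2)" by (simp add: power2_eq_square)
    also have "\<dots> = xv powr (-3)" by (simp add: powr_add[symmetric])
    also have "\<dots> = 1 / xv ^ 3" using xv by (simp add: powr_minus_divide)
    finally show ?thesis .
  qed
  also have "(exp (s * pv))\<^sup>2 = exp (2 * s * pv)" by (simp add: exp_double[symmetric] algebra_simps power2_eq_square exp_add[symmetric])
  finally have r: "1 / (rho0 th lam psi s y)\<^sup>2 = xv ^ 3 * exp (- 2 * s * pv)"
    using xv rho0_pos[OF y] by (simp add: exp_minus field_simps)
  have "xv ^ 3 \<le> (u * exp (7 * lam)) ^ 3" using xv Xle by (intro power_mono) auto
  also have "\<dots> = u ^ 3 * exp (21 * lam)" by (simp add: power_mult_distrib exp_of_nat_mult[symmetric])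
  finally have a: "xv ^ 3 \<le> u ^ 3 * exp (21 * lam)" .
  have "2 * kap * u \<le> 2 * s * pv"
  proof -
    have "u * kap \<le> s * (u * kap)" using s u kap_pos by simp
    also have "\<dots> \<le> s * pv" using pv s by (intro mult_left_mono) auto
    finally show ?thesis by (simp add: mult.commute)
  qed
  then have b: "exp (- 2 * s * pv) \<le> exp (- 2 * kap * u)" by simp
  have "xv ^ 3 * exp (- 2 * s * pv) \<le> u ^ 3 * exp (21 * lam) * exp (- 2 * kap * u)"
    using a b xv u by (intro mult_mono) auto
  also have "\<dots> = exp (21 * lam) * (u ^ 3 * exp (- 2 * kap * u))" by simp
  also have "\<dots> \<le> exp (21 * lam) * (3 / (2 * kap)) ^ 3" by (rule mult_left_mono[OF cubic[OF less_imp_le[OF u]]]) simp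
  finally show ?thesis using r by (simp add: Kw_def)
qed

lemma g_meas:
  assumes "S \<subseteq> QT T" "S \<in> lmeasurable"
  shows "(\<lambda>y. th s (snd y)) \<in> borel_measurable (lebesgue_on S)"
    and "(\<lambda>y. psi (fst y)) \<in> borel_measurable (lebesgue_on S)"
proof -
  have "continuous_on S (\<lambda>y. th s (snd y))"
  proof (rule continuous_on_compose2[OF th_cont continuous_on_snd])
    show "snd ` S \<subseteq> {0..<T}"
    proof
      fix z assume "z \<in> snd ` S"
      then obtain y where "y \<in> S" "z = snd y" by blast
      then have "y \<in> QT T" using assms by blast
      then show "z \<in> {0..<T}" using QT_D(2,3) \<open>z = snd y\<close> by fastforce
    qed
  qed (intro continuous_intros)
  from meas_cont[OF this assms(2)] show "(\<lambda>y. th s (snd y)) \<in> borel_measurable (lebesgue_on S)" .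
  have "continuous_on S (\<lambda>y. psi (fst y))"
  proof (rule continuous_on_compose2[OF psic continuous_on_fst])
    show "fst ` S \<subseteq> {0..1}"
    proof
      fix z assume "z \<in> fst ` S"
      then obtain y where "y \<in> S" "z = fst y" by blast
      then have "y \<in> QT T" using assms by blast
      then show "z \<in> {0..1}" using QT_D(1) \<open>z = fst y\<close> by (fastforce simp: Omega_def)
    qed
  qed (intro continuous_intros)
  from meas_cont[OF this assms(2)] show "(\<lambda>y. psi (fst y)) \<in> borel_measurable (lebesgue_on S)" .
qed

lemma wt_meas:
  assumes "S \<subseteq> QT T" "S \<in> lmeasurable"
  shows "(\<lambda>y. rho th lam psi s y) \<in> borel_measurable (lebesgue_on S)"
    and "(\<lambda>y. rho0 th lam psi s y) \<in> borel_measurable (lebesgue_on S)"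
proof -
  note [measurable] = g_meas[OF assms]
  show "(\<lambda>y. rho th lam psi s y) \<in> borel_measurable (lebesgue_on S)"
    unfolding rho_def phi_def psihat_def by measurable
  then show "(\<lambda>y. rho0 th lam psi s y) \<in> borel_measurable (lebesgue_on S)"
    unfolding rho0_def xi_def psihat_def by measurable
qed

lemma Omega_meas:
  shows "(\<lambda>x. rho th lam psi s (x, 0)) \<in> borel_measurable (lebesgue_on Omega)"
    and "(\<lambda>x. phi th lam psi s (x, 0)) \<in> borel_measurable (lebesgue_on Omega)"
proof -
  have "continuous_on Omega psi" using psic by (rule continuous_on_subset) (auto simp: Omega_def)
  then have [measurable]: "psi \<in> borel_measurable (lebesgue_on Omega)" using Omega_lmeas by (rule meas_cont)
  show "(\<lambda>x. phi th lam psi s (x, 0)) \<in> borel_measurable (lebesgue_on Omega)"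
    unfolding phi_def psihat_def fst_conv snd_conv by measurable
  then show "(\<lambda>x. rho th lam psi s (x, 0)) \<in> borel_measurable (lebesgue_on Omega)"
    unfolding rho_def by measurable
qed

lemma phi0_bd: "x \<in> Omega \<Longrightarrow> 0 \<le> phi th lam psi s (x, 0) \<and> phi th lam psi s (x, 0) \<le> 2 * (lam * exp (12 * lam))"
  using phi_ge[of x 0] phi_le[of x 0] th0 kap_pos by auto

end

lemma meas_univ: "continuous_on UNIV g \<Longrightarrow> S \<in> lmeasurable \<Longrightarrow> g \<in> borel_measurable (lebesgue_on S)"
  by (rule meas_cont) (auto intro: continuous_on_subset)

lemma P0_cont: assumes "p \<in> P0 T"
  shows "continuous_on UNIV p" "continuous_on UNIV (dt p)" "continuous_on UNIV (dx (dx p))"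
  using assms by (auto simp: P0_def C2_def)

lemma AE_on: "(\<And>y. y \<in> S \<Longrightarrow> P y) \<Longrightarrow> AE y in lebesgue_on S. P y"
  by (rule AE_I2) simp

locale mn = wt +
  fixes A :: "real \<times> real \<Rightarrow> real" and \<omega> :: "real set" and C0 :: real
  assumes omega: "open \<omega>" "closure \<omega> \<subseteq> Omega"
    and Alinf: "isLinf (QT T) A"
    and carl: "\<forall>p\<in>P0 T. carleman_lhs T th lam psi s p \<le> C0 * ipP0 T \<omega> th lam psi A s p p"
begin

lemma A_meas: "A \<in> borel_measurable (lebesgue_on (QT T))"
  using Alinf by (simp add: isLinf_def)

lemma A_ae: "\<exists>a. AE y in lebesgue_on (QT T). \<bar>A y\<bar> \<le> a"
proof -
  define E where "E = esssup (lebesgue_on (QT T)) (\<lambda>y. ereal \<bar>A y\<bar>)"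
  have Efin: "E < \<infinity>" using Alinf by (simp add: isLinf_def E_def)
  have ae: "AE y in lebesgue_on (QT T). ereal \<bar>A y\<bar> \<le> E" unfolding E_def by (rule esssup_AE)
  have "AE y in lebesgue_on (QT T). \<bar>A y\<bar> \<le> real_of_ereal E"
    using ae
  proof (rule eventually_mono)
    fix y assume h: "ereal \<bar>A y\<bar> \<le> E"
    show "\<bar>A y\<bar> \<le> real_of_ereal E"
    proof (cases E)
      case (real r) then show ?thesis using h by simp
    next
      case PInf then show ?thesis using Efin by simp
    next
      case MInf then show ?thesis using h by simp
    qed
  qed
  then show ?thesis by blast
qed

lemma QT_sets: "QT T \<in> lmeasurable" by (rule QT_lmeas)
lemma qT_lm: "qT \<omega> T \<in> lmeasurable" using qT_lmeas omega by blast
lemma qT_QT: "qT \<omega> T \<subseteq> QT T" using qT_sub omega by blast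

lemma L_meas: "p \<in> P0 T \<Longrightarrow> Lstar A p \<in> borel_measurable (lebesgue_on (QT T))"
proof -
  assume p: "p \<in> P0 T"
  note [measurable] = meas_univ[OF P0_cont(1)[OF p] QT_sets] meas_univ[OF P0_cont(2)[OF p] QT_sets]
    meas_univ[OF P0_cont(3)[OF p] QT_sets] A_meas
  show ?thesis unfolding Lstar_def by measurable
qed

lemma bdd_QT: fixes g :: "real \<times> real \<Rightarrow> real" assumes g: "continuous_on UNIV g" shows "\<exists>B\<ge>0. \<forall>y\<in>QT T. \<bar>g y\<bar> \<le> B"
proof -
  obtain B where "\<forall>y\<in>QT T. \<bar>g y\<bar> \<le> B" using cont_bdd_QT[OF g, of T] by blast
  then have "\<forall>y\<in>QT T. \<bar>g y\<bar> \<le> max B 0" by auto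
  then show ?thesis by (intro exI[of _ "max B 0"]) auto
qed

lemma L_bd: assumes p: "p \<in> P0 T" shows "\<exists>B. AE y in lebesgue_on (QT T). \<bar>Lstar A p y\<bar> \<le> B"
proof -
  obtain a where a: "AE y in lebesgue_on (QT T). \<bar>A y\<bar> \<le> a" using A_ae by blast
  obtain B1 where B1: "B1 \<ge> 0" "\<forall>y\<in>QT T. \<bar>p y\<bar> \<le> B1" using bdd_QT[OF P0_cont(1)[OF p]] by blast
  obtain B2 where B2: "\<forall>y\<in>QT T. \<bar>dt p y\<bar> \<le> B2" using bdd_QT[OF P0_cont(2)[OF p]] by blast
  obtain B3 where B3: "\<forall>y\<in>QT T. \<bar>dx (dx p) y\<bar> \<le> B3" using bdd_QT[OF P0_cont(3)[OF p]] by blast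
  have "AE y in lebesgue_on (QT T). \<bar>Lstar A p y\<bar> \<le> B2 + B3 + \<bar>a\<bar> * B1"
    using a AE_space
  proof (rule eventually_elim2)
    fix y assume ay: "\<bar>A y\<bar> \<le> a" and y: "y \<in> space (lebesgue_on (QT T))"
    then have y': "y \<in> QT T" by simp
    have "\<bar>A y * p y\<bar> = \<bar>A y\<bar> * \<bar>p y\<bar>" by (rule abs_mult)
    also have "\<dots> \<le> \<bar>a\<bar> * B1" using ay B1 y' by (intro mult_mono) auto
    finally have "\<bar>A y * p y\<bar> \<le> \<bar>a\<bar> * B1" .
    moreover have "\<bar>dt p y\<bar> \<le> B2" "\<bar>dx (dx p) y\<bar> \<le> B3" using B2 B3 y' by auto
    ultimately show "\<bar>Lstar A p y\<bar> \<le> B2 + B3 + \<bar>a\<bar> * B1" unfolding Lstar_def by linarith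
  qed
  then show ?thesis by blast
qed

lemma w_meas: "(\<lambda>y. 1 / (rho th lam psi s y)\<^sup>2) \<in> borel_measurable (lebesgue_on (QT T))"
proof -
  note [measurable] = wt_meas(1)[OF order_refl QT_sets]
  show ?thesis by measurable
qed

lemma w0_meas: "S \<subseteq> QT T \<Longrightarrow> S \<in> lmeasurable \<Longrightarrow> (\<lambda>y. 1 / (rho0 th lam psi s y)\<^sup>2) \<in> borel_measurable (lebesgue_on S)"
proof -
  assume a: "S \<subseteq> QT T" "S \<in> lmeasurable"
  note [measurable] = wt_meas(2)[OF a]
  show ?thesis by measurable
qed

lemma int1: assumes p: "p \<in> P0 T" and q: "q \<in> P0 T"
  shows "integrable (lebesgue_on (QT T)) (\<lambda>y. 1 / (rho th lam psi s y)\<^sup>2 * Lstar A p y * Lstar A q y)"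
proof -
  note [measurable] = w_meas L_meas[OF p] L_meas[OF q]
  have m: "(\<lambda>y. 1 / (rho th lam psi s y)\<^sup>2 * Lstar A p y * Lstar A q y) \<in> borel_measurable (lebesgue_on (QT T))"
    by measurable
  obtain Bp where Bp: "AE y in lebesgue_on (QT T). \<bar>Lstar A p y\<bar> \<le> Bp" using L_bd[OF p] by blast
  obtain Bq where Bq: "AE y in lebesgue_on (QT T). \<bar>Lstar A q y\<bar> \<le> Bq" using L_bd[OF q] by blast
  have "AE y in lebesgue_on (QT T). \<bar>1 / (rho th lam psi s y)\<^sup>2 * Lstar A p y * Lstar A q y\<bar> \<le> Bp * Bq"
    using Bp Bq AE_space[of "lebesgue_on (QT T)"]
  proof eventually_elim
    fix y assume hp: "\<bar>Lstar A p y\<bar> \<le> Bp" and hq: "\<bar>Lstar A q y\<bar> \<le> Bq" and y: "y \<in> space (lebesgue_on (QT T))"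
    then have y': "y \<in> QT T" by simp
    have w: "0 \<le> 1 / (rho th lam psi s y)\<^sup>2" "1 / (rho th lam psi s y)\<^sup>2 \<le> 1" using w_bd[OF y'] by auto
    have "\<bar>1 / (rho th lam psi s y)\<^sup>2 * Lstar A p y * Lstar A q y\<bar>
        = 1 / (rho th lam psi s y)\<^sup>2 * (\<bar>Lstar A p y\<bar> * \<bar>Lstar A q y\<bar>)" using w by (simp add: abs_mult)
    also have "\<dots> \<le> 1 * (\<bar>Lstar A p y\<bar> * \<bar>Lstar A q y\<bar>)" using w by (intro mult_right_mono) auto
    also have "\<dots> \<le> Bp * Bq" using hp hq by (simp add: mult_mono')
    finally show "\<bar>1 / (rho th lam psi s y)\<^sup>2 * Lstar A p y * Lstar A q y\<bar> \<le> Bp * Bq" .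
  qed
  then show ?thesis by (rule int_bdd[OF QT_sets m])
qed

lemma int2: assumes p: "p \<in> P0 T" and q: "q \<in> P0 T"
  shows "integrable (lebesgue_on (qT \<omega> T)) (\<lambda>y. 1 / (rho0 th lam psi s y)\<^sup>2 * p y * q y)"
proof -
  note [measurable] = w0_meas[OF qT_QT qT_lm] meas_univ[OF P0_cont(1)[OF p] qT_lm] meas_univ[OF P0_cont(1)[OF q] qT_lm]
  have m: "(\<lambda>y. 1 / (rho0 th lam psi s y)\<^sup>2 * p y * q y) \<in> borel_measurable (lebesgue_on (qT \<omega> T))"
    by measurable
  obtain Bp where Bp: "Bp \<ge> 0" "\<forall>y\<in>QT T. \<bar>p y\<bar> \<le> Bp" using bdd_QT[OF P0_cont(1)[OF p]] by blast
  obtain Bq where Bq: "Bq \<ge> 0" "\<forall>y\<in>QT T. \<bar>q y\<bar> \<le> Bq" using bdd_QT[OF P0_cont(1)[OF q]] by blast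
  have "AE y in lebesgue_on (qT \<omega> T). \<bar>1 / (rho0 th lam psi s y)\<^sup>2 * p y * q y\<bar> \<le> Kw * (Bp * Bq)"
  proof (rule AE_on)
    fix y assume "y \<in> qT \<omega> T"
    then have y': "y \<in> QT T" using qT_QT by blast
    have w: "0 \<le> 1 / (rho0 th lam psi s y)\<^sup>2" "1 / (rho0 th lam psi s y)\<^sup>2 \<le> Kw" using w0_bd[OF y'] by auto
    have "\<bar>1 / (rho0 th lam psi s y)\<^sup>2 * p y * q y\<bar>
        = 1 / (rho0 th lam psi s y)\<^sup>2 * (\<bar>p y\<bar> * \<bar>q y\<bar>)" using w by (simp add: abs_mult)
    also have "\<dots> \<le> Kw * (Bp * Bq)"
    proof -
      have pq: "\<bar>p y\<bar> * \<bar>q y\<bar> \<le> Bp * Bq" using Bp Bq y' by (intro mult_mono) auto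
      have "0 \<le> Kw" using w by linarith
      then show ?thesis by (rule mult_mono[OF w(2) pq]) auto
    qed
    finally show "\<bar>1 / (rho0 th lam psi s y)\<^sup>2 * p y * q y\<bar> \<le> Kw * (Bp * Bq)" .
  qed
  then show ?thesis by (rule int_bdd[OF qT_lm m])
qed

lemma ip_eq: "ipP0 T \<omega> th lam psi A s p q =
   integral\<^sup>L (lebesgue_on (QT T)) (\<lambda>y. 1 / (rho th lam psi s y)\<^sup>2 * Lstar A p y * Lstar A q y)
   + s ^ 3 * lam ^ 4 * integral\<^sup>L (lebesgue_on (qT \<omega> T)) (\<lambda>y. 1 / (rho0 th lam psi s y)\<^sup>2 * p y * q y)"
  unfolding ipP0_def by (simp only: LINT_on[OF lmeas_sets[OF QT_sets]] LINT_on[OF lmeas_sets[OF qT_lm]])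

sublocale sip: semi_ip "P0 T" "ipP0 T \<omega> th lam psi A s"
proof
  show "(\<lambda>_. 0) \<in> P0 T" by (rule P0_zero)
  show "\<And>u v a b. u \<in> P0 T \<Longrightarrow> v \<in> P0 T \<Longrightarrow> lc a u b v \<in> P0 T" by (rule P0_lc)
  show "\<And>u v. u \<in> P0 T \<Longrightarrow> v \<in> P0 T \<Longrightarrow> ipP0 T \<omega> th lam psi A s u v = ipP0 T \<omega> th lam psi A s v u"
    unfolding ipP0_def by (simp add: mult_ac)
  show "\<And>u. u \<in> P0 T \<Longrightarrow> 0 \<le> ipP0 T \<omega> th lam psi A s u u"
  proof -
    fix u assume u: "u \<in> P0 T"
    have "0 \<le> integral\<^sup>L (lebesgue_on (QT T)) (\<lambda>y. 1 / (rho th lam psi s y)\<^sup>2 * Lstar A u y * Lstar A u y)"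
      by (intro integral_nonneg_AE AE_I2) (simp add: mult.assoc)
    moreover have "0 \<le> integral\<^sup>L (lebesgue_on (qT \<omega> T)) (\<lambda>y. 1 / (rho0 th lam psi s y)\<^sup>2 * u y * u y)"
      by (intro integral_nonneg_AE AE_I2) (simp add: mult.assoc)
    moreover have "0 \<le> s ^ 3 * lam ^ 4" using s lam by simp
    ultimately show "0 \<le> ipP0 T \<omega> th lam psi A s u u" unfolding ip_eq by simp
  qed
  show "\<And>u v w a b. u \<in> P0 T \<Longrightarrow> v \<in> P0 T \<Longrightarrow> w \<in> P0 T \<Longrightarrow>
    ipP0 T \<omega> th lam psi A s (lc a u b v) w = a * ipP0 T \<omega> th lam psi A s u w + b * ipP0 T \<omega> th lam psi A s v w"
  proof -
    fix u v w a b assume u: "u \<in> P0 T" and v: "v \<in> P0 T" and w: "w \<in> P0 T"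
    have Cu: "C2 u" and Cv: "C2 v" using u v by (auto simp: P0_def)
    have e1: "integral\<^sup>L (lebesgue_on (QT T)) (\<lambda>y. 1 / (rho th lam psi s y)\<^sup>2 * Lstar A (lc a u b v) y * Lstar A w y)
       = a * integral\<^sup>L (lebesgue_on (QT T)) (\<lambda>y. 1 / (rho th lam psi s y)\<^sup>2 * Lstar A u y * Lstar A w y)
       + b * integral\<^sup>L (lebesgue_on (QT T)) (\<lambda>y. 1 / (rho th lam psi s y)\<^sup>2 * Lstar A v y * Lstar A w y)"
    proof -
      have "integral\<^sup>L (lebesgue_on (QT T)) (\<lambda>y. 1 / (rho th lam psi s y)\<^sup>2 * Lstar A (lc a u b v) y * Lstar A w y)
        = integral\<^sup>L (lebesgue_on (QT T)) (\<lambda>y. a * (1 / (rho th lam psi s y)\<^sup>2 * Lstar A u y * Lstar A w y)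
            + b * (1 / (rho th lam psi s y)\<^sup>2 * Lstar A v y * Lstar A w y))"
        unfolding Lstar_lc[OF Cu Cv] by (simp add: lc_def algebra_simps)
      also have "\<dots> = integral\<^sup>L (lebesgue_on (QT T)) (\<lambda>y. a * (1 / (rho th lam psi s y)\<^sup>2 * Lstar A u y * Lstar A w y))
            + integral\<^sup>L (lebesgue_on (QT T)) (\<lambda>y. b * (1 / (rho th lam psi s y)\<^sup>2 * Lstar A v y * Lstar A w y))"
        by (rule Bochner_Integration.integral_add[OF integrable_mult_right[OF int1[OF u w]] integrable_mult_right[OF int1[OF v w]]])
      finally show ?thesis by (simp only: integral_mult_right_zero)
    qed
    have e2: "integral\<^sup>L (lebesgue_on (qT \<omega> T)) (\<lambda>y. 1 / (rho0 th lam psi s y)\<^sup>2 * lc a u b v y * w y)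
       = a * integral\<^sup>L (lebesgue_on (qT \<omega> T)) (\<lambda>y. 1 / (rho0 th lam psi s y)\<^sup>2 * u y * w y)
       + b * integral\<^sup>L (lebesgue_on (qT \<omega> T)) (\<lambda>y. 1 / (rho0 th lam psi s y)\<^sup>2 * v y * w y)"
    proof -
      have "integral\<^sup>L (lebesgue_on (qT \<omega> T)) (\<lambda>y. 1 / (rho0 th lam psi s y)\<^sup>2 * lc a u b v y * w y)
        = integral\<^sup>L (lebesgue_on (qT \<omega> T)) (\<lambda>y. a * (1 / (rho0 th lam psi s y)\<^sup>2 * u y * w y)
            + b * (1 / (rho0 th lam psi s y)\<^sup>2 * v y * w y))"
        by (simp add: lc_def algebra_simps add_divide_distrib)
      also have "\<dots> = integral\<^sup>L (lebesgue_on (qT \<omega> T)) (\<lambda>y. a * (1 / (rho0 th lam psi s y)\<^sup>2 * u y * w y))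
            + integral\<^sup>L (lebesgue_on (qT \<omega> T)) (\<lambda>y. b * (1 / (rho0 th lam psi s y)\<^sup>2 * v y * w y))"
        by (rule Bochner_Integration.integral_add[OF integrable_mult_right[OF int2[OF u w]] integrable_mult_right[OF int2[OF v w]]])
      finally show ?thesis by (simp only: integral_mult_right_zero)
    qed
    show "ipP0 T \<omega> th lam psi A s (lc a u b v) w = a * ipP0 T \<omega> th lam psi A s u w + b * ipP0 T \<omega> th lam psi A s v w"
      unfolding ip_eq e1 e2 by (simp add: algebra_simps)
  qed
qed

end

lemma sq_le: assumes "\<bar>a\<bar> \<le> (b::real)" shows "a\<^sup>2 \<le> b\<^sup>2"
  using power_mono[OF assms abs_ge_zero, of 2] by simp

locale mf = mn +
  fixes z0 :: "real \<Rightarrow> real" and B :: "real \<times> real \<Rightarrow> real"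
  assumes L2B: "isL2 (QT T) (\<lambda>y. rho0 th lam psi s y * B y)"
    and L2z: "isL2 Omega z0"
begin

definition C0' where "C0' = max C0 0"
definition I4 where "I4 u = integral\<^sup>L (lebesgue_on (QT T)) (\<lambda>y. 1 / (rho0 th lam psi s y)\<^sup>2 * (u y)\<^sup>2)"
definition I2 where "I2 u = integral\<^sup>L (lebesgue_on Omega) (\<lambda>x. 1 / (rho th lam psi s (x, 0))\<^sup>2 * (u (x, 0))\<^sup>2)"
definition I0 where "I0 u = integral\<^sup>L (lebesgue_on Omega) (\<lambda>x. (u (x, 0))\<^sup>2)"
definition nB where "nB = normL2 (QT T) (\<lambda>y. rho0 th lam psi s y * B y)"
definition nz where "nz = normL2 Omega z0"
definition cc where "cc = normLinf Omega (\<lambda>x. phi th lam psi s (x, 0))"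

lemma Omega_sets: "Omega \<in> sets lebesgue" using Omega_lmeas by (rule lmeas_sets)
lemma QT_sets': "QT T \<in> sets lebesgue" using QT_lmeas by (rule lmeas_sets)

lemma nB_eq: "nB = sqrt (integral\<^sup>L (lebesgue_on (QT T)) (\<lambda>y. (rho0 th lam psi s y * B y)\<^sup>2))"
  unfolding nB_def normL2_def by (simp only: LINT_on[OF QT_sets'])

lemma nz_eq: "nz = sqrt (integral\<^sup>L (lebesgue_on Omega) (\<lambda>x. (z0 x)\<^sup>2))"
  unfolding nz_def normL2_def by (simp only: LINT_on[OF Omega_sets])

lemma nB_nonneg: "nB \<ge> 0" unfolding nB_eq by (intro real_sqrt_ge_zero integral_nonneg_AE AE_I2) simp
lemma nz_nonneg: "nz \<ge> 0" unfolding nz_eq by (intro real_sqrt_ge_zero integral_nonneg_AE AE_I2) simp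

lemma Bu: assumes u: "u \<in> P0 T"
  shows "integrable (lebesgue_on (QT T)) (\<lambda>y. B y * u y)"
    "\<bar>integral\<^sup>L (lebesgue_on (QT T)) (\<lambda>y. B y * u y)\<bar> \<le> nB * sqrt (I4 u)"
proof -
  define gB where "gB y = rho0 th lam psi s y * B y" for y
  define hu where "hu y = u y / rho0 th lam psi s y" for y
  have gm: "gB \<in> borel_measurable (lebesgue_on (QT T))" using L2B by (simp add: isL2_def gB_def[abs_def])
  have gi: "integrable (lebesgue_on (QT T)) (\<lambda>y. (gB y)\<^sup>2)"
    using L2B sint_on[OF QT_sets'] by (simp add: isL2_def gB_def[abs_def])
  note [measurable] = meas_univ[OF P0_cont(1)[OF u] QT_sets] wt_meas(2)[OF order_refl QT_sets]
  have hm: "hu \<in> borel_measurable (lebesgue_on (QT T))" unfolding hu_def[abs_def] by measurable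
  have hsq: "(hu y)\<^sup>2 = 1 / (rho0 th lam psi s y)\<^sup>2 * (u y)\<^sup>2" for y by (simp add: hu_def power_divide)
  obtain Bu where Bu: "Bu \<ge> 0" "\<forall>y\<in>QT T. \<bar>u y\<bar> \<le> Bu" using bdd_QT[OF P0_cont(1)[OF u]] by blast
  have hi: "integrable (lebesgue_on (QT T)) (\<lambda>y. (hu y)\<^sup>2)"
  proof (rule int_bdd[OF QT_sets])
    show "(\<lambda>y. (hu y)\<^sup>2) \<in> borel_measurable (lebesgue_on (QT T))" using hm by measurable
    show "AE y in lebesgue_on (QT T). \<bar>(hu y)\<^sup>2\<bar> \<le> Kw * Bu\<^sup>2"
    proof (rule AE_on)
      fix y assume y: "y \<in> QT T"
      have w: "0 \<le> 1 / (rho0 th lam psi s y)\<^sup>2" "1 / (rho0 th lam psi s y)\<^sup>2 \<le> Kw" using w0_bd[OF y] by auto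
      have ub: "(u y)\<^sup>2 \<le> Bu\<^sup>2" using Bu y by (intro sq_le) auto
      have k0: "0 \<le> Kw" using w by linarith
      have "1 / (rho0 th lam psi s y)\<^sup>2 * (u y)\<^sup>2 \<le> Kw * Bu\<^sup>2"
        by (rule mult_mono[OF w(2) ub k0]) simp
      then show "\<bar>(hu y)\<^sup>2\<bar> \<le> Kw * Bu\<^sup>2" unfolding hsq using w by simp
    qed
  qed
  have eq: "B y * u y = gB y * hu y" if "y \<in> space (lebesgue_on (QT T))" for y
  proof -
    have "rho0 th lam psi s y > 0" using rho0_pos that by simp
    then show ?thesis by (simp add: gB_def hu_def)
  qed
  have gh: "integrable (lebesgue_on (QT T)) (\<lambda>y. gB y * hu y)" by (rule CS_int(1)[OF gm gi hm hi])
  show "integrable (lebesgue_on (QT T)) (\<lambda>y. B y * u y)"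
    using gh by (subst Bochner_Integration.integrable_cong[OF refl eq]) auto
  have "integral\<^sup>L (lebesgue_on (QT T)) (\<lambda>y. B y * u y) = integral\<^sup>L (lebesgue_on (QT T)) (\<lambda>y. gB y * hu y)"
    by (rule Bochner_Integration.integral_cong[OF refl eq])
  also have "\<bar>\<dots>\<bar> \<le> sqrt (integral\<^sup>L (lebesgue_on (QT T)) (\<lambda>y. (gB y)\<^sup>2)) * sqrt (integral\<^sup>L (lebesgue_on (QT T)) (\<lambda>y. (hu y)\<^sup>2))"
    by (rule CS_int(2)[OF gm gi hm hi])
  also have "integral\<^sup>L (lebesgue_on (QT T)) (\<lambda>y. (hu y)\<^sup>2) = I4 u" unfolding I4_def hsq ..
  also have "sqrt (integral\<^sup>L (lebesgue_on (QT T)) (\<lambda>y. (gB y)\<^sup>2)) = nB" unfolding nB_eq gB_def ..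
  finally show "\<bar>integral\<^sup>L (lebesgue_on (QT T)) (\<lambda>y. B y * u y)\<bar> \<le> nB * sqrt (I4 u)" .
qed

lemma u0_meas: "u \<in> P0 T \<Longrightarrow> (\<lambda>x. u (x, 0)) \<in> borel_measurable (lebesgue_on Omega)"
proof -
  assume u: "u \<in> P0 T"
  have "continuous_on UNIV (\<lambda>x. u (x, 0::real))"
    by (rule continuous_on_compose2[OF P0_cont(1)[OF u]]) (auto intro!: continuous_intros)
  then show ?thesis by (rule meas_univ[OF _ Omega_lmeas])
qed

lemma u0_bd: "u \<in> P0 T \<Longrightarrow> \<exists>B\<ge>0. \<forall>x\<in>Omega. \<bar>u (x, 0)\<bar> \<le> B"
proof -
  assume u: "u \<in> P0 T"
  obtain B where "\<forall>x\<in>Omega. \<bar>u (x, 0)\<bar> \<le> B" using cont_bdd_Omega[OF P0_cont(1)[OF u]] by blast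
  then have "\<forall>x\<in>Omega. \<bar>u (x, 0)\<bar> \<le> max B 0" by auto
  then show ?thesis by (intro exI[of _ "max B 0"]) auto
qed

lemma u0_int: assumes u: "u \<in> P0 T" shows "integrable (lebesgue_on Omega) (\<lambda>x. (u (x, 0))\<^sup>2)"
proof -
  obtain Bu where Bu: "Bu \<ge> 0" "\<forall>x\<in>Omega. \<bar>u (x, 0)\<bar> \<le> Bu" using u0_bd[OF u] by blast
  note [measurable] = u0_meas[OF u]
  show ?thesis
  proof (rule int_bdd[OF Omega_lmeas])
    show "(\<lambda>x. (u (x, 0))\<^sup>2) \<in> borel_measurable (lebesgue_on Omega)" by measurable
    show "AE x in lebesgue_on Omega. \<bar>(u (x, 0))\<^sup>2\<bar> \<le> Bu\<^sup>2"
      by (rule AE_on) (use Bu in \<open>auto intro!: sq_le\<close>)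
  qed
qed

lemma zu: assumes u: "u \<in> P0 T"
  shows "integrable (lebesgue_on Omega) (\<lambda>x. z0 x * u (x, 0))"
    "\<bar>integral\<^sup>L (lebesgue_on Omega) (\<lambda>x. z0 x * u (x, 0))\<bar> \<le> nz * sqrt (I0 u)"
proof -
  have zm: "z0 \<in> borel_measurable (lebesgue_on Omega)" using L2z by (simp add: isL2_def)
  have zi: "integrable (lebesgue_on Omega) (\<lambda>x. (z0 x)\<^sup>2)" using L2z sint_on[OF Omega_sets] by (simp add: isL2_def)
  show "integrable (lebesgue_on Omega) (\<lambda>x. z0 x * u (x, 0))" by (rule CS_int(1)[OF zm zi u0_meas[OF u] u0_int[OF u]])
  have "\<bar>integral\<^sup>L (lebesgue_on Omega) (\<lambda>x. z0 x * u (x, 0))\<bar> \<le> sqrt (integral\<^sup>L (lebesgue_on Omega) (\<lambda>x. (z0 x)\<^sup>2)) * sqrt (I0 u)"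
    unfolding I0_def by (rule CS_int(2)[OF zm zi u0_meas[OF u] u0_int[OF u]])
  then show "\<bar>integral\<^sup>L (lebesgue_on Omega) (\<lambda>x. z0 x * u (x, 0))\<bar> \<le> nz * sqrt (I0 u)" unfolding nz_eq .
qed

lemma rhs_eq: "rhs_functional T z0 B u = integral\<^sup>L (lebesgue_on Omega) (\<lambda>x. z0 x * u (x, 0)) + integral\<^sup>L (lebesgue_on (QT T)) (\<lambda>y. B y * u y)"
  unfolding rhs_functional_def by (simp only: LINT_on[OF Omega_sets] LINT_on[OF QT_sets'])

lemma f_lin: assumes u: "u \<in> P0 T" and v: "v \<in> P0 T"
  shows "rhs_functional T z0 B (lc a u b v) = a * rhs_functional T z0 B u + b * rhs_functional T z0 B v"
proof -
  have e1: "integral\<^sup>L (lebesgue_on Omega) (\<lambda>x. z0 x * lc a u b v (x, 0))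
     = a * integral\<^sup>L (lebesgue_on Omega) (\<lambda>x. z0 x * u (x, 0)) + b * integral\<^sup>L (lebesgue_on Omega) (\<lambda>x. z0 x * v (x, 0))"
  proof -
    have "integral\<^sup>L (lebesgue_on Omega) (\<lambda>x. z0 x * lc a u b v (x, 0))
      = integral\<^sup>L (lebesgue_on Omega) (\<lambda>x. a * (z0 x * u (x, 0)) + b * (z0 x * v (x, 0)))"
      by (simp add: lc_def algebra_simps)
    also have "\<dots> = integral\<^sup>L (lebesgue_on Omega) (\<lambda>x. a * (z0 x * u (x, 0))) + integral\<^sup>L (lebesgue_on Omega) (\<lambda>x. b * (z0 x * v (x, 0)))"
      by (rule Bochner_Integration.integral_add[OF integrable_mult_right[OF zu(1)[OF u]] integrable_mult_right[OF zu(1)[OF v]]])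
    finally show ?thesis by (simp only: integral_mult_right_zero)
  qed
  have e2: "integral\<^sup>L (lebesgue_on (QT T)) (\<lambda>y. B y * lc a u b v y)
     = a * integral\<^sup>L (lebesgue_on (QT T)) (\<lambda>y. B y * u y) + b * integral\<^sup>L (lebesgue_on (QT T)) (\<lambda>y. B y * v y)"
  proof -
    have "integral\<^sup>L (lebesgue_on (QT T)) (\<lambda>y. B y * lc a u b v y)
      = integral\<^sup>L (lebesgue_on (QT T)) (\<lambda>y. a * (B y * u y) + b * (B y * v y))"
      by (simp add: lc_def algebra_simps)
    also have "\<dots> = integral\<^sup>L (lebesgue_on (QT T)) (\<lambda>y. a * (B y * u y)) + integral\<^sup>L (lebesgue_on (QT T)) (\<lambda>y. b * (B y * v y))"
      by (rule Bochner_Integration.integral_add[OF integrable_mult_right[OF Bu(1)[OF u]] integrable_mult_right[OF Bu(1)[OF v]]])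
    finally show ?thesis by (simp only: integral_mult_right_zero)
  qed
  show ?thesis unfolding rhs_eq e1 e2 by (simp add: algebra_simps)
qed

lemma cc_ae: "AE x in lebesgue_on Omega. phi th lam psi s (x, 0) \<le> cc"
proof -
  define E where "E = esssup (lebesgue_on Omega) (\<lambda>x. ereal \<bar>phi th lam psi s (x, 0)\<bar>)"
  note [measurable] = Omega_meas(2)
  have "E \<le> ereal (2 * (lam * exp (12 * lam)))"
    unfolding E_def
  proof (rule esssup_I)
    show "(\<lambda>x. ereal \<bar>phi th lam psi s (x, 0)\<bar>) \<in> borel_measurable (lebesgue_on Omega)" by measurable
    show "AE x in lebesgue_on Omega. ereal \<bar>phi th lam psi s (x, 0)\<bar> \<le> ereal (2 * (lam * exp (12 * lam)))"
      by (rule AE_on) (use phi0_bd in auto)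
  qed
  then have Efin: "E \<noteq> \<infinity>" by auto
  have ae: "AE x in lebesgue_on Omega. ereal \<bar>phi th lam psi s (x, 0)\<bar> \<le> E" unfolding E_def by (rule esssup_AE)
  show ?thesis
    using ae
  proof (rule eventually_mono)
    fix x assume h: "ereal \<bar>phi th lam psi s (x, 0)\<bar> \<le> E"
    have "\<bar>phi th lam psi s (x, 0)\<bar> \<le> real_of_ereal E"
    proof (cases E)
      case (real r) then show ?thesis using h by simp
    next
      case PInf then show ?thesis using Efin by simp
    next
      case MInf then show ?thesis using h by simp
    qed
    then show "phi th lam psi s (x, 0) \<le> cc" unfolding cc_def normLinf_def E_def by simp
  qed
qed

lemma w00_meas: "(\<lambda>x. 1 / (rho th lam psi s (x, 0))\<^sup>2) \<in> borel_measurable (lebesgue_on Omega)"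
proof -
  note [measurable] = Omega_meas(1)
  show ?thesis by measurable
qed

lemma rho00_ge1: "x \<in> Omega \<Longrightarrow> rho th lam psi s (x, 0) \<ge> 1"
  unfolding rho_def using phi0_bd s by simp

lemma I0_bd: assumes u: "u \<in> P0 T" shows "I0 u \<le> exp (2 * cc * s) * I2 u"
proof -
  obtain Bu where Bu: "Bu \<ge> 0" "\<forall>x\<in>Omega. \<bar>u (x, 0)\<bar> \<le> Bu" using u0_bd[OF u] by blast
  have i1: "integrable (lebesgue_on Omega) (\<lambda>x. 1 / (rho th lam psi s (x, 0))\<^sup>2 * (u (x, 0))\<^sup>2)"
  proof (rule int_bdd[OF Omega_lmeas])
    note [measurable] = w00_meas u0_meas[OF u]
    show "(\<lambda>x. 1 / (rho th lam psi s (x, 0))\<^sup>2 * (u (x, 0))\<^sup>2) \<in> borel_measurable (lebesgue_on Omega)" by measurable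
    show "AE x in lebesgue_on Omega. \<bar>1 / (rho th lam psi s (x, 0))\<^sup>2 * (u (x, 0))\<^sup>2\<bar> \<le> Bu\<^sup>2"
    proof (rule AE_on)
      fix x assume x: "x \<in> Omega"
      have r: "(rho th lam psi s (x, 0))\<^sup>2 \<ge> 1" using rho00_ge1[OF x] by (simp add: one_le_power)
      then have w: "0 \<le> 1 / (rho th lam psi s (x, 0))\<^sup>2" "1 / (rho th lam psi s (x, 0))\<^sup>2 \<le> 1"
        by (auto simp: divide_le_eq_1)
      have "(u (x, 0))\<^sup>2 \<le> Bu\<^sup>2" using Bu x by (intro sq_le) auto
      then have "1 / (rho th lam psi s (x, 0))\<^sup>2 * (u (x, 0))\<^sup>2 \<le> 1 * Bu\<^sup>2"
        using w by (intro mult_mono) auto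
      then show "\<bar>1 / (rho th lam psi s (x, 0))\<^sup>2 * (u (x, 0))\<^sup>2\<bar> \<le> Bu\<^sup>2" using w by simp
    qed
  qed
  have "I0 u \<le> integral\<^sup>L (lebesgue_on Omega) (\<lambda>x. exp (2 * cc * s) * (1 / (rho th lam psi s (x, 0))\<^sup>2 * (u (x, 0))\<^sup>2))"
    unfolding I0_def
  proof (rule integral_mono_AE[OF u0_int[OF u] integrable_mult_right[OF i1]])
    show "AE x in lebesgue_on Omega. (u (x, 0))\<^sup>2 \<le> exp (2 * cc * s) * (1 / (rho th lam psi s (x, 0))\<^sup>2 * (u (x, 0))\<^sup>2)"
      using cc_ae
    proof (rule eventually_mono)
      fix x assume h: "phi th lam psi s (x, 0) \<le> cc"
      have "(rho th lam psi s (x, 0))\<^sup>2 = exp (2 * s * phi th lam psi s (x, 0))"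
        unfolding rho_def by (simp add: power2_eq_square exp_add[symmetric])
      also have "\<dots> \<le> exp (2 * cc * s)" using h s by (simp add: mult.commute mult.left_commute)
      finally have "(rho th lam psi s (x, 0))\<^sup>2 \<le> exp (2 * cc * s)" .
      then have "1 \<le> exp (2 * cc * s) * (1 / (rho th lam psi s (x, 0))\<^sup>2)"
        unfolding rho_def by (simp add: field_simps)
      then have "1 * (u (x, 0))\<^sup>2 \<le> exp (2 * cc * s) * (1 / (rho th lam psi s (x, 0))\<^sup>2) * (u (x, 0))\<^sup>2"
        by (intro mult_right_mono) auto
      then show "(u (x, 0))\<^sup>2 \<le> exp (2 * cc * s) * (1 / (rho th lam psi s (x, 0))\<^sup>2 * (u (x, 0))\<^sup>2)"
        by (simp add: mult.assoc)
    qed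
  qed
  also have "\<dots> = exp (2 * cc * s) * I2 u" unfolding I2_def by (rule integral_mult_right_zero)
  finally show ?thesis .
qed

lemma carl_bds: assumes u: "u \<in> P0 T"
  shows "s ^ 3 * lam ^ 4 * I4 u \<le> C0' * ipP0 T \<omega> th lam psi A s u u"
    "s ^ 3 * lam ^ 4 * exp (14 * lam) * I2 u \<le> C0' * ipP0 T \<omega> th lam psi A s u u"
proof -
  have ip0: "ipP0 T \<omega> th lam psi A s u u \<ge> 0" using sip.ip_pos[OF u] .
  have "carleman_lhs T th lam psi s u \<le> C0 * ipP0 T \<omega> th lam psi A s u u" using carl u by blast
  also have "\<dots> \<le> C0' * ipP0 T \<omega> th lam psi A s u u" unfolding C0'_def using ip0 by (intro mult_right_mono) auto
  finally have cl: "carleman_lhs T th lam psi s u \<le> C0' * ipP0 T \<omega> th lam psi A s u u" .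
  have eq: "carleman_lhs T th lam psi s u =
     integral\<^sup>L (lebesgue_on Omega) (\<lambda>x. 1 / (rho th lam psi s (x, 0))\<^sup>2 * (dx u (x, 0))\<^sup>2)
     + s ^ 3 * lam ^ 4 * exp (14 * lam) * I2 u
     + s * lam ^ 2 * integral\<^sup>L (lebesgue_on (QT T)) (\<lambda>y. 1 / (rho1 th lam psi s y)\<^sup>2 * (dx u y)\<^sup>2)
     + s ^ 3 * lam ^ 4 * I4 u"
    unfolding carleman_lhs_def I2_def I4_def by (simp only: LINT_on[OF Omega_sets] LINT_on[OF QT_sets'])
  have n1: "0 \<le> integral\<^sup>L (lebesgue_on Omega) (\<lambda>x. 1 / (rho th lam psi s (x, 0))\<^sup>2 * (dx u (x, 0))\<^sup>2)"
    by (intro integral_nonneg_AE AE_I2) simp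
  have n3: "0 \<le> integral\<^sup>L (lebesgue_on (QT T)) (\<lambda>y. 1 / (rho1 th lam psi s y)\<^sup>2 * (dx u y)\<^sup>2)"
    by (intro integral_nonneg_AE AE_I2) simp
  have n2: "0 \<le> I2 u" unfolding I2_def by (intro integral_nonneg_AE AE_I2) simp
  have n4: "0 \<le> I4 u" unfolding I4_def by (intro integral_nonneg_AE AE_I2) simp
  have c1: "0 \<le> s * lam ^ 2 * integral\<^sup>L (lebesgue_on (QT T)) (\<lambda>y. 1 / (rho1 th lam psi s y)\<^sup>2 * (dx u y)\<^sup>2)"
    using n3 s lam by simp
  have c2: "0 \<le> s ^ 3 * lam ^ 4 * exp (14 * lam) * I2 u" using n2 s lam by simp
  have c4: "0 \<le> s ^ 3 * lam ^ 4 * I4 u" using n4 s lam by simp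
  show "s ^ 3 * lam ^ 4 * I4 u \<le> C0' * ipP0 T \<omega> th lam psi A s u u"
    using cl eq n1 c1 c2 by linarith
  show "s ^ 3 * lam ^ 4 * exp (14 * lam) * I2 u \<le> C0' * ipP0 T \<omega> th lam psi A s u u"
    using cl eq n1 c1 c4 by linarith
qed

end

context mf begin

definition Mc where "Mc = sqrt C0' / lam\<^sup>2 * (1 / sqrt (s ^ 3)) * (nB + exp (cc * s) * nz)"

lemma Mc_nonneg: "Mc \<ge> 0"
proof -
  have "C0' \<ge> 0" unfolding C0'_def by simp
  then show ?thesis
    unfolding Mc_def using nB_nonneg nz_nonneg s
    by (intro mult_nonneg_nonneg divide_nonneg_nonneg add_nonneg_nonneg) auto
qed

lemma f_bd: assumes u: "u \<in> P0 T"
  shows "\<bar>rhs_functional T z0 B u\<bar> \<le> Mc * sip.nrm u"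
proof -
  define ipu where "ipu = ipP0 T \<omega> th lam psi A s u u"
  have ipu0: "ipu \<ge> 0" unfolding ipu_def by (rule sip.ip_pos[OF u])
  define N where "N = sqrt ipu"
  have N: "sip.nrm u = N" unfolding N_def ipu_def sip.nrm_def ..
  define D where "D = s ^ 3 * lam ^ 4"
  have D: "D > 0" unfolding D_def using s lam by simp
  have sD: "sqrt D = sqrt (s ^ 3) * lam\<^sup>2"
  proof -
    have "sqrt (lam ^ 4) = lam\<^sup>2" by (rule real_sqrt_unique) simp_all
    then show ?thesis unfolding D_def by (simp add: real_sqrt_mult)
  qed
  have C0'0: "C0' \<ge> 0" unfolding C0'_def by simp
  have n2: "0 \<le> I2 u" unfolding I2_def by (intro integral_nonneg_AE AE_I2) simp
  have n4: "0 \<le> I4 u" unfolding I4_def by (intro integral_nonneg_AE AE_I2) simp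
  have h4: "I4 u \<le> C0' * ipu / D"
    using carl_bds(1)[OF u] D by (simp add: ipu_def D_def field_simps)
  have h2: "I2 u \<le> C0' * ipu / D"
  proof -
    have "D * I2 u \<le> D * exp (14 * lam) * I2 u"
    proof -
      have "1 \<le> exp (14 * lam)" using lam by simp
      then have "D * 1 \<le> D * exp (14 * lam)" using D by (intro mult_left_mono) auto
      then show ?thesis using n2 by (intro mult_right_mono) auto
    qed
    also have "\<dots> \<le> C0' * ipu" using carl_bds(2)[OF u] by (simp add: ipu_def D_def)
    finally show ?thesis using D by (simp add: field_simps)
  qed
  define Q where "Q = sqrt C0' * N / sqrt D"
  have Q0: "Q \<ge> 0" unfolding Q_def N_def using D C0'0 ipu0
    by (intro mult_nonneg_nonneg divide_nonneg_nonneg) auto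
  have q4: "sqrt (I4 u) \<le> Q"
  proof -
    have "sqrt (I4 u) \<le> sqrt (C0' * ipu / D)" using h4 by simp
    also have "\<dots> = Q" unfolding Q_def N_def by (simp add: real_sqrt_mult real_sqrt_divide)
    finally show ?thesis .
  qed
  have q0: "sqrt (I0 u) \<le> exp (cc * s) * Q"
  proof -
    have "I0 u \<le> exp (2 * cc * s) * I2 u" by (rule I0_bd[OF u])
    also have "\<dots> \<le> exp (2 * cc * s) * (C0' * ipu / D)" using h2 by (intro mult_left_mono) auto
    finally have "sqrt (I0 u) \<le> sqrt (exp (2 * cc * s) * (C0' * ipu / D))" by simp
    also have "\<dots> = sqrt (exp (2 * cc * s)) * Q" unfolding Q_def N_def by (simp add: real_sqrt_mult real_sqrt_divide)
    also have "sqrt (exp (2 * cc * s)) = exp (cc * s)"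
    proof -
      have "exp (2 * cc * s) = (exp (cc * s))\<^sup>2" by (simp add: power2_eq_square exp_add[symmetric])
      then show ?thesis by simp
    qed
    finally show ?thesis .
  qed
  have "\<bar>rhs_functional T z0 B u\<bar> \<le> \<bar>integral\<^sup>L (lebesgue_on Omega) (\<lambda>x. z0 x * u (x, 0))\<bar> + \<bar>integral\<^sup>L (lebesgue_on (QT T)) (\<lambda>y. B y * u y)\<bar>"
    unfolding rhs_eq by (rule abs_triangle_ineq)
  also have "\<dots> \<le> nz * sqrt (I0 u) + nB * sqrt (I4 u)" using zu(2)[OF u] Bu(2)[OF u] by linarith
  also have "\<dots> \<le> nz * (exp (cc * s) * Q) + nB * Q"
    using q0 q4 nz_nonneg nB_nonneg by (intro add_mono mult_left_mono) auto
  also have "\<dots> = Mc * N"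
    unfolding Mc_def Q_def sD using lam s by (simp add: field_simps)
  finally show ?thesis unfolding N .
qed

lemma riesz_mf: "\<exists>X. P_Cauchy (P0 T) (ipP0 T \<omega> th lam psi A s) X
     \<and> (\<forall>Y. P_Cauchy (P0 T) (ipP0 T \<omega> th lam psi A s) Y \<longrightarrow> P_inner (ipP0 T \<omega> th lam psi A s) X Y = P_ext (rhs_functional T z0 B) Y)
     \<and> (\<forall>Y. P_Cauchy (P0 T) (ipP0 T \<omega> th lam psi A s) Y \<and> (\<forall>Z. P_Cauchy (P0 T) (ipP0 T \<omega> th lam psi A s) Z \<longrightarrow> P_inner (ipP0 T \<omega> th lam psi A s) Y Z = P_ext (rhs_functional T z0 B) Z) \<longrightarrow> P_equiv (ipP0 T \<omega> th lam psi A s) X Y)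
     \<and> P_norm (ipP0 T \<omega> th lam psi A s) X \<le> Mc"
  by (rule sip.riesz[OF f_lin f_bd Mc_nonneg])

end

lemma powr_32: "(s::real) > 0 \<Longrightarrow> s powr (-3/2) = 1 / sqrt (s ^ 3)"
proof -
  assume s: "s > 0"
  have "sqrt (s ^ 3) = (s ^ 3) powr (1/2)" using s by (simp add: powr_half_sqrt)
  also have "\<dots> = (s powr 3) powr (1/2)" using s by simp
  also have "\<dots> = s powr (3/2)" by (simp add: powr_powr)
  finally have "sqrt (s ^ 3) = s powr (3/2)" .
  then show ?thesis by (simp add: powr_minus_divide)
qed

theorem lemma2:
  fixes \<omega> :: "real set" and T T1 lam0 s0 C0 :: real
    and psi :: "real \<Rightarrow> real" and th :: "real \<Rightarrow> real \<Rightarrow> real"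
  assumes omega: "open \<omega>" "\<omega> \<noteq> {}" "closure \<omega> \<subseteq> Omega"
    and T: "T > 0" "0 < T1" "T1 < min (1/4) (3 * T / 8)"
    and psi: "psi C1_differentiable_on {0..1}" "\<forall>x\<in>Omega. 0 < psi x \<and> psi x < 1"
      "psi 0 = 0" "psi 1 = 0" "\<forall>x\<in>closure (Omega - \<omega>). \<bar>deriv psi x\<bar> > 0"
    and theta: "\<forall>s\<ge>1. C2_on (th s) {0..<T}
       \<and> (\<forall>t\<in>{0..T/4}. th s t = 1 + (1 - 4 * t / T) powr (s * lam0\<^sup>2 * exp (2 * lam0)))
       \<and> (\<forall>t\<in>{T/4..T - 2 * T1}. th s t = 1)
       \<and> mono_on {T - 2 * T1..T - T1} (th s)
       \<and> (\<forall>t\<in>{T - T1..<T}. th s t = 1 / (T - t))"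
    and params: "lam0 \<ge> 1" "s0 \<ge> 1"
    and carleman: "\<forall>A. isLinf (QT T) A \<longrightarrow>
       (\<forall>s. s \<ge> max (normLinf (QT T) A powr (2/3)) s0 \<longrightarrow>
         (\<forall>p\<in>P0 T. carleman_lhs T th lam0 psi s p \<le> C0 * ipP0 T \<omega> th lam0 psi A s p p))"
  shows "\<exists>C>0. \<forall>A s B z0.
     isLinf (QT T) A \<and> s \<ge> max (normLinf (QT T) A powr (2/3)) s0
     \<and> isL2 (QT T) (\<lambda>y. rho0 th lam0 psi s y * B y) \<and> isL2 Omega z0 \<longrightarrow>
     (let ip = ipP0 T \<omega> th lam0 psi A s;
          solves = (\<lambda>X. \<forall>Y. P_Cauchy (P0 T) ip Y \<longrightarrow>
                          P_inner ip X Y = P_ext (rhs_functional T z0 B) Y);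
          c = normLinf Omega (\<lambda>x. phi th lam0 psi s (x, 0))
      in \<exists>X. P_Cauchy (P0 T) ip X \<and> solves X
           \<and> (\<forall>Y. P_Cauchy (P0 T) ip Y \<and> solves Y \<longrightarrow> P_equiv ip X Y)
           \<and> P_norm ip X \<le> C * s powr (-3/2) *
               (normL2 (QT T) (\<lambda>y. rho0 th lam0 psi s y * B y) + exp (c * s) * normL2 Omega z0))"
proof -
  define K where "K = sqrt (max C0 0) / lam0\<^sup>2"
  have K0: "K \<ge> 0" unfolding K_def by simp
  have psic: "continuous_on {0..1} psi" using psi(1) by (rule C1_differentiable_imp_continuous_on)
  show ?thesis
  proof (rule exI[of _ "K + 1"], intro conjI allI impI)
    show "K + 1 > 0" using K0 by simp
    fix A s B z0
    assume H: "isLinf (QT T) A \<and> s \<ge> max (normLinf (QT T) A powr (2/3)) s0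
     \<and> isL2 (QT T) (\<lambda>y. rho0 th lam0 psi s y * B y) \<and> isL2 Omega z0"
    have A: "isLinf (QT T) A" using H by blast
    have sge: "s \<ge> max (normLinf (QT T) A powr (2/3)) s0" using H by blast
    have L2B: "isL2 (QT T) (\<lambda>y. rho0 th lam0 psi s y * B y)" using H by blast
    have L2z: "isL2 Omega z0" using H by blast
    have s1: "s \<ge> 1" using sge params(2) by linarith
    have th_s: "C2_on (th s) {0..<T}
       \<and> (\<forall>t\<in>{0..T/4}. th s t = 1 + (1 - 4 * t / T) powr (s * lam0\<^sup>2 * exp (2 * lam0)))
       \<and> (\<forall>t\<in>{T/4..T - 2 * T1}. th s t = 1)
       \<and> mono_on {T - 2 * T1..T - T1} (th s)
       \<and> (\<forall>t\<in>{T - T1..<T}. th s t = 1 / (T - t))" using theta s1 by blast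
    have carl_s: "\<forall>p\<in>P0 T. carleman_lhs T th lam0 psi s p \<le> C0 * ipP0 T \<omega> th lam0 psi A s p p"
      using carleman A sge by blast
    interpret m: mf T T1 lam0 s psi th A \<omega> C0 z0 B
      by unfold_locales (fact T(1) T(2) T(3) psic psi(2) th_s params(1) s1 omega(1) omega(3) A carl_s L2B L2z)+
    obtain X where X: "P_Cauchy (P0 T) (ipP0 T \<omega> th lam0 psi A s) X
     \<and> (\<forall>Y. P_Cauchy (P0 T) (ipP0 T \<omega> th lam0 psi A s) Y \<longrightarrow> P_inner (ipP0 T \<omega> th lam0 psi A s) X Y = P_ext (rhs_functional T z0 B) Y)
     \<and> (\<forall>Y. P_Cauchy (P0 T) (ipP0 T \<omega> th lam0 psi A s) Y \<and> (\<forall>Z. P_Cauchy (P0 T) (ipP0 T \<omega> th lam0 psi A s) Z \<longrightarrow> P_inner (ipP0 T \<omega> th lam0 psi A s) Y Z = P_ext (rhs_functional T z0 B) Z) \<longrightarrow> P_equiv (ipP0 T \<omega> th lam0 psi A s) X Y)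
     \<and> P_norm (ipP0 T \<omega> th lam0 psi A s) X \<le> m.Mc"
      using m.riesz_mf by blast
    have Z0: "m.nB + exp (m.cc * s) * m.nz \<ge> 0" using m.nB_nonneg m.nz_nonneg by simp
    have ps: "s powr (-3/2) = 1 / sqrt (s ^ 3)" using s1 by (intro powr_32) simp
    have "m.Mc = K * (1 / sqrt (s ^ 3)) * (m.nB + exp (m.cc * s) * m.nz)"
      unfolding m.Mc_def K_def m.C0'_def ..
    also have "\<dots> \<le> (K + 1) * (1 / sqrt (s ^ 3)) * (m.nB + exp (m.cc * s) * m.nz)"
      using Z0 s1 by (intro mult_right_mono) auto
    also have "\<dots> = (K + 1) * s powr (-3/2) *
               (normL2 (QT T) (\<lambda>y. rho0 th lam0 psi s y * B y) + exp (normLinf Omega (\<lambda>x. phi th lam0 psi s (x, 0)) * s) * normL2 Omega z0)"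
      unfolding ps m.nB_def m.nz_def m.cc_def ..
    finally have nrm: "P_norm (ipP0 T \<omega> th lam0 psi A s) X \<le> (K + 1) * s powr (-3/2) *
               (normL2 (QT T) (\<lambda>y. rho0 th lam0 psi s y * B y) + exp (normLinf Omega (\<lambda>x. phi th lam0 psi s (x, 0)) * s) * normL2 Omega z0)"
      using X by linarith
    show "let ip = ipP0 T \<omega> th lam0 psi A s;
          solves = (\<lambda>X. \<forall>Y. P_Cauchy (P0 T) ip Y \<longrightarrow>
                          P_inner ip X Y = P_ext (rhs_functional T z0 B) Y);
          c = normLinf Omega (\<lambda>x. phi th lam0 psi s (x, 0))
      in \<exists>X. P_Cauchy (P0 T) ip X \<and> solves X
           \<and> (\<forall>Y. P_Cauchy (P0 T) ip Y \<and> solves Y \<longrightarrow> P_equiv ip X Y)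
           \<and> P_norm ip X \<le> (K + 1) * s powr (-3/2) *
               (normL2 (QT T) (\<lambda>y. rho0 th lam0 psi s y * B y) + exp (c * s) * normL2 Omega z0)"
      unfolding Let_def using X nrm by blast
  qed
qed

end
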